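(* Let $F$ be a field of characteristic $0$, $d\ge1$, $\lambda\vdash k$ a partition with $n$ parts and $\sigma\in S_n$. If the largest part of $\sigma(\lambda)$ is at least $2d$, then $\mathrm{tr}(\sigma\,ST(\lambda)(x_1,\dots,x_k))=0$ for all $x_1,\dots,x_k\in M_d(F)$.
   Context: $ST(\lambda)$: for $\lambda=(h_1,\dots,h_n)\vdash k$, set $X_j:=x_{h_1+\dots+h_{j-1}+1}\cdots x_{h_1+\dots+h_j}$ and $ST(\lambda)(x_1,\dots,x_k):=\sum_{\tau\in S_k}\epsilon_\tau (X_1\otimes\cdots\otimes X_n)(x_{\tau(1)},\dots,x_{\tau(k)})$, evaluated in $M_d(F)^{\otimes n}=\mathrm{End}((F^d)^{\otimes n})$. $S_n$ acts on $(F^d)^{\otimes n}$ by permuting tensor factors. For $\sigma\in S_n$ with cycle decomposition $c_1\cdots c_l$ (fixed points included as $1$-cycles), $\sigma(\lambda)$ is the partition $(\sum_{i\in c_1}h_i,\dots,\sum_{i\in c_l}h_i)$ arranged non-increasingly. *)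

theory Defs
  imports "Jordan_Normal_Form.Matrix" "HOL-Combinatorics.Permutations" "HOL-Library.FuncSet"
    "HOL-Library.Multiset"
begin

text \<open>Elements of the tensor power (F^d)^{\<otimes>n} are indexed (w.r.t. the standard basis
 e_{i_0} \<otimes> ... \<otimes> e_{i_{n-1}}) by index functions i : {0..<n} \<rightarrow> {0..<d}.
 Endomorphisms of (F^d)^{\<otimes>n} are represented by their matrices, i.e. functions of two index
 functions.  All indices are 0-based.\<close>

definition tidx :: "nat \<Rightarrow> nat \<Rightarrow> (nat \<Rightarrow> nat) set" where
  "tidx d n = {0..<n} \<rightarrow>\<^sub>E {0..<d}"

type_synonym 'a tmat = "(nat \<Rightarrow> nat) \<Rightarrow> (nat \<Rightarrow> nat) \<Rightarrow> 'a"

definition tmult :: "nat \<Rightarrow> nat \<Rightarrow> 'a::comm_ring_1 tmat \<Rightarrow> 'a tmat \<Rightarrow> 'a tmat" where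
  "tmult d n A B = (\<lambda>i i''. \<Sum>i'\<in>tidx d n. A i i' * B i' i'')"

definition ttrace :: "nat \<Rightarrow> nat \<Rightarrow> 'a::comm_ring_1 tmat \<Rightarrow> 'a" where
  "ttrace d n A = (\<Sum>i\<in>tidx d n. A i i)"

definition tensor_op :: "nat \<Rightarrow> (nat \<Rightarrow> 'a::comm_ring_1 mat) \<Rightarrow> 'a tmat" where
  "tensor_op n As = (\<lambda>i i'. \<Prod>j<n. As j $$ (i j, i' j))"

text \<open>Matrix of the action of \<sigma> \<in> S_n by permuting tensor factors:
 v_0 \<otimes> ... \<otimes> v_{n-1} \<mapsto> v_{\<sigma>^{-1}(0)} \<otimes> ... \<otimes> v_{\<sigma>^{-1}(n-1)},
 i.e. e_{i'} \<mapsto> e_{i' \<circ> \<sigma>^{-1}}.\<close>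
definition perm_op :: "nat \<Rightarrow> (nat \<Rightarrow> nat) \<Rightarrow> 'a::comm_ring_1 tmat" where
  "perm_op n \<sigma> = (\<lambda>i i'. if (\<forall>j<n. i j = i' (inv_into UNIV \<sigma> j)) then 1 else 0)"

definition mat_prod_list :: "nat \<Rightarrow> 'a::comm_ring_1 mat list \<Rightarrow> 'a mat" where
  "mat_prod_list d As = foldr (*) As (1\<^sub>m d)"

text \<open>Partition \<lambda> = (h_1,...,h_n) given as a list h (0-based).
 X_j (0-based) = x_{off_j} \<cdots> x_{off_j + h_j - 1}, off_j = h_0+...+h_{j-1}.\<close>
definition block_start :: "nat list \<Rightarrow> nat \<Rightarrow> nat" where
  "block_start h j = sum_list (take j h)"

definition block_prod :: "nat \<Rightarrow> nat list \<Rightarrow> (nat \<Rightarrow> 'a::comm_ring_1 mat) \<Rightarrow> nat \<Rightarrow> 'a mat" where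
  "block_prod d h x j = mat_prod_list d (map (\<lambda>t. x (block_start h j + t)) [0..<h ! j])"

definition ST :: "nat \<Rightarrow> nat list \<Rightarrow> (nat \<Rightarrow> 'a::comm_ring_1 mat) \<Rightarrow> 'a tmat" where
  "ST d h x = (\<lambda>i i'. \<Sum>\<tau> | \<tau> permutes {0..<sum_list h}.
      of_int (sign \<tau>) * tensor_op (length h) (block_prod d h (\<lambda>m. x (\<tau> m))) i i')"

definition is_partition :: "nat list \<Rightarrow> nat \<Rightarrow> bool" where
  "is_partition h k \<longleftrightarrow> sum_list h = k \<and> (\<forall>p\<in>set h. p > 0) \<and> sorted (rev h)"

text \<open>Cycle (orbit) of \<sigma> through i; cycles of \<sigma> on {0..<n}, fixed points included.\<close>
definition cycle_of :: "(nat \<Rightarrow> nat) \<Rightarrow> nat \<Rightarrow> nat set" where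
  "cycle_of \<sigma> i = {(\<sigma> ^^ m) i | m. True}"

definition perm_cycles :: "nat \<Rightarrow> (nat \<Rightarrow> nat) \<Rightarrow> nat set set" where
  "perm_cycles n \<sigma> = cycle_of \<sigma> ` {0..<n}"

definition sigma_partition :: "(nat \<Rightarrow> nat) \<Rightarrow> nat list \<Rightarrow> nat multiset" where
  "sigma_partition \<sigma> h = image_mset (\<lambda>c. \<Sum>i\<in>c. h ! i) (mset_set (perm_cycles (length h) \<sigma>))"

end

theory Submission
  imports Defs "HOL-Combinatorics.Cycles"
begin

definition idx :: "nat list \<Rightarrow> nat \<Rightarrow> nat" where
  "idx u x = (THE i. i < length u \<and> u ! i = x)"

lemma idx_nth: "distinct u \<Longrightarrow> i < length u \<Longrightarrow> idx u (u ! i) = i"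
  unfolding idx_def by (rule the_equality) (auto simp: nth_eq_iff_index_eq)

definition perm_between :: "nat list \<Rightarrow> nat list \<Rightarrow> nat \<Rightarrow> nat" where
  "perm_between u w = (\<lambda>x. if x \<in> set u then w ! (idx u x) else x)"

lemma perm_between_map:
  assumes "length u = length w" "distinct u"
  shows "map (perm_between u w) u = w"
proof (rule nth_equalityI)
  show "length (map (perm_between u w) u) = length w" using assms by simp
  fix i assume "i < length (map (perm_between u w) u)"
  then have i: "i < length u" by simp
  then show "map (perm_between u w) u ! i = w ! i"
    unfolding perm_between_def using i assms by (simp add: idx_nth)
qed

lemma perm_between_permutes:
  assumes "length u = length w" "distinct u" "distinct w" "set u = set w"
  shows "perm_between u w permutes set u"
proof -
  have m: "map (perm_between u w) u = w" using perm_between_map assms by simp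
  have "inj_on (perm_between u w) (set u)"
    using m assms by (metis distinct_map)
  moreover have "perm_between u w ` set u = set u"
    using m assms by (metis set_map)
  ultimately have "bij_betw (perm_between u w) (set u) (set u)" by (simp add: bij_betw_def)
  then show ?thesis
    by (rule bij_imp_permutes) (simp add: perm_between_def)
qed

lemma perm_between_unique:
  assumes "p permutes set u" "map p u = w" "distinct u"
  shows "p = perm_between u w"
proof
  fix x show "p x = perm_between u w x"
  proof (cases "x \<in> set u")
    case True
    then obtain i where i: "i < length u" "x = u ! i" by (metis in_set_conv_nth)
    have "w ! i = p x" using assms(2) i by auto
    moreover have "idx u x = i" using i assms(3) by (simp add: idx_nth)
    ultimately show ?thesis using True by (simp add: perm_between_def)
  next
    case False
    then show ?thesis using assms(1) by (simp add: perm_between_def permutes_not_in)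
  qed
qed

definition srt :: "nat set \<Rightarrow> nat list" where
  "srt S = sorted_list_of_set S"

definition lsign :: "nat list \<Rightarrow> int" where
  "lsign w = sign (perm_between (srt (set w)) w)"

lemma srt_props: "distinct (srt S)" "finite S \<Longrightarrow> set (srt S) = S"
  "finite S \<Longrightarrow> length (srt S) = card S"
  by (auto simp: srt_def)

lemma length_srt_distinct: "distinct w \<Longrightarrow> length (srt (set w)) = length w"
  by (simp add: srt_def distinct_card)

lemma lsign_map:
  assumes "distinct w" "\<rho> permutes set w"
  shows "lsign (map \<rho> w) = sign \<rho> * lsign w"
proof -
  let ?s = "srt (set w)"
  have sm: "set (map \<rho> w) = set w" using assms(2) by (simp add: permutes_image)
  have ds: "distinct ?s" "set ?s = set w" "length ?s = length w"
    using srt_props length_srt_distinct assms by auto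
  define \<pi> where "\<pi> = perm_between ?s w"
  have pp: "\<pi> permutes set w" unfolding \<pi>_def using perm_between_permutes[of ?s w] ds assms by auto
  have pm: "map \<pi> ?s = w" unfolding \<pi>_def using perm_between_map ds by auto
  have "\<rho> \<circ> \<pi> permutes set w" using pp assms(2) by (simp add: permutes_compose)
  moreover have "map (\<rho> \<circ> \<pi>) ?s = map \<rho> w" using pm by (metis map_map)
  ultimately have "\<rho> \<circ> \<pi> = perm_between ?s (map \<rho> w)"
    using perm_between_unique[of "\<rho> \<circ> \<pi>" ?s "map \<rho> w"] ds by simp
  then have "lsign (map \<rho> w) = sign (\<rho> \<circ> \<pi>)" unfolding lsign_def sm by simp
  also have "\<dots> = sign \<rho> * sign \<pi>"
    by (rule sign_compose) (use pp assms(2) in \<open>auto simp: permutation_permutes\<close>)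
  finally show ?thesis unfolding lsign_def \<pi>_def by simp
qed

lemma lsign_srt: "finite S \<Longrightarrow> lsign (srt S) = 1"
proof -
  assume f: "finite S"
  have "id = perm_between (srt S) (srt S)"
    by (rule perm_between_unique) (auto simp: srt_props f permutes_id)
  then show ?thesis unfolding lsign_def using f by (simp add: srt_props)
qed

definition sg :: "nat set \<Rightarrow> nat set \<Rightarrow> int" where
  "sg S T = lsign (srt S @ srt T)"

lemma lsign_append:
  assumes "distinct u" "distinct v" "set u \<inter> set v = {}"
  shows "lsign (u @ v) = lsign u * lsign v * sg (set u) (set v)"
proof -
  let ?su = "srt (set u)" and ?sv = "srt (set v)"
  have du: "distinct ?su" "set ?su = set u" "length ?su = length u"
    using srt_props length_srt_distinct assms by auto
  have dv: "distinct ?sv" "set ?sv = set v" "length ?sv = length v"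
    using srt_props length_srt_distinct assms by auto
  define p1 where "p1 = perm_between ?su u"
  define p2 where "p2 = perm_between ?sv v"
  have pp1: "p1 permutes set u" unfolding p1_def using perm_between_permutes[of ?su u] du assms by auto
  have pp2: "p2 permutes set v" unfolding p2_def using perm_between_permutes[of ?sv v] dv assms by auto
  have pm1: "map p1 ?su = u" unfolding p1_def using perm_between_map du by auto
  have pm2: "map p2 ?sv = v" unfolding p2_def using perm_between_map dv by auto
  have w0: "distinct (?su @ ?sv)" using du dv assms by auto
  have pc: "p1 \<circ> p2 permutes set (?su @ ?sv)"
    using pp1 pp2 du dv permutes_compose permutes_subset by (metis Un_upper1 Un_upper2 set_append)
  have "map (p1 \<circ> p2) ?su = u"
  proof -
    have "map p2 ?su = ?su" using pp2 du assms(3)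
      by (intro map_idI) (metis disjoint_iff permutes_not_in)
    then show ?thesis using pm1 by (metis map_map)
  qed
  moreover have "map (p1 \<circ> p2) ?sv = v"
  proof -
    have "map p1 v = v" using pp1 assms(3)
      by (intro map_idI) (metis disjoint_iff permutes_not_in)
    then show ?thesis using pm2 by (metis map_map)
  qed
  ultimately have m: "map (p1 \<circ> p2) (?su @ ?sv) = u @ v" by simp
  have "lsign (u @ v) = sign (p1 \<circ> p2) * lsign (?su @ ?sv)"
    using lsign_map[OF w0 pc] m by simp
  also have "sign (p1 \<circ> p2) = sign p1 * sign p2"
    by (rule sign_compose) (use pp1 pp2 in \<open>auto simp: permutation_permutes\<close>)
  finally show ?thesis
    unfolding lsign_def sg_def p1_def p2_def by simp
qed

lemma sg_assoc:
  assumes "finite S" "finite T" "finite U" "S \<inter> T = {}" "S \<inter> U = {}" "T \<inter> U = {}"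
  shows "sg S T * sg (S \<union> T) U = sg T U * sg S (T \<union> U)"
proof -
  have d: "distinct (srt S)" "distinct (srt T)" "distinct (srt U)" by (auto simp: srt_props)
  have s: "set (srt S) = S" "set (srt T) = T" "set (srt U) = U" using assms by (auto simp: srt_props)
  have "lsign ((srt S @ srt T) @ srt U) = sg S T * sg (S \<union> T) U"
    using lsign_append[of "srt S @ srt T" "srt U"] d s assms
    by (simp add: lsign_srt sg_def[of S T] Int_Un_distrib2)
  moreover have "lsign (srt S @ (srt T @ srt U)) = sg T U * sg S (T \<union> U)"
    using lsign_append[of "srt S" "srt T @ srt U"] d s assms
    by (simp add: lsign_srt sg_def[of T U] Int_Un_distrib)
  ultimately show ?thesis by simp
qed

lemma sign_cycle_of_list:
  "distinct cs \<Longrightarrow> sign (cycle_of_list cs) = (-1) ^ (length cs - 1)"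
proof (induction cs rule: cycle_of_list.induct)
  case (1 i j cs)
  have "sign (cycle_of_list (i # j # cs)) = sign (Transposition.transpose i j) * sign (cycle_of_list (j # cs))"
    by (simp add: sign_compose permutation_of_cycle permutation_swap_id)
  then show ?case using 1 by (simp add: sign_swap_id o_def)
qed simp_all

lemma lsign_rotate1:
  assumes "distinct w"
  shows "lsign (rotate1 w) = (-1) ^ (length w - 1) * lsign w"
proof -
  have "rotate1 w = map (cycle_of_list w) w"
    using cyclic_rotation[OF assms, of 1] by simp
  then show ?thesis
    using lsign_map[OF assms cycle_permutes[of w]] sign_cycle_of_list[OF assms] by simp
qed

lemma lsign_rotate:
  assumes "distinct w"
  shows "lsign (rotate m w) = (-1) ^ (m * (length w - 1)) * lsign w"
proof (induction m)
  case (Suc m)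
  have "lsign (rotate (Suc m) w) = lsign (rotate1 (rotate m w))" by simp
  also have "\<dots> = (-1) ^ (length w - 1) * lsign (rotate m w)"
    using lsign_rotate1[of "rotate m w"] assms by simp
  finally show ?case using Suc by (simp add: power_add)
qed simp

lemma sg_commute:
  assumes "finite S" "finite T" "S \<inter> T = {}" "even (card S)"
  shows "sg T S = sg S T"
proof -
  have "srt T @ srt S = rotate (length (srt S)) (srt S @ srt T)"
    by (simp add: rotate_append)
  moreover have "distinct (srt S @ srt T)" using assms by (auto simp: srt_props)
  ultimately have "lsign (srt T @ srt S) = (-1) ^ (length (srt S) * (length (srt S @ srt T) - 1)) * lsign (srt S @ srt T)"
    using lsign_rotate by metis
  moreover have "even (length (srt S))" using assms by (simp add: srt_props)
  ultimately show ?thesis unfolding sg_def by (simp add: power_mult)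
qed

section \<open>Even Grassmann algebra\<close>

typedef (overloaded) 'a ev = "{f :: nat set \<Rightarrow> 'a::comm_ring_1. \<forall>U. f U \<noteq> 0 \<longrightarrow> finite U \<and> even (card U)}"
  morphisms gc Abs_ev
  by (rule exI[of _ "\<lambda>_. 0"]) simp

setup_lifting type_definition_ev

lemma gc_eqI: "(\<And>U. gc f U = gc g U) \<Longrightarrow> f = g"
  by (metis gc_inverse ext)

lemma gc_nz: "gc f U \<noteq> 0 \<Longrightarrow> finite U \<and> even (card U)"
  using gc[of f] by auto

definition gmul :: "(nat set \<Rightarrow> 'a::comm_ring_1) \<Rightarrow> (nat set \<Rightarrow> 'a) \<Rightarrow> nat set \<Rightarrow> 'a" where
  "gmul f g U = (if finite U then \<Sum>S\<in>Pow U. of_int (sg S (U - S)) * f S * g (U - S) else 0)"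

lemma gmul_closed:
  fixes f g :: "nat set \<Rightarrow> 'a::comm_ring_1"
  assumes f: "\<forall>U. f U \<noteq> 0 \<longrightarrow> finite U \<and> even (card U)"
     and g: "\<forall>U. g U \<noteq> 0 \<longrightarrow> finite U \<and> even (card U)"
  shows "\<forall>U. gmul f g U \<noteq> 0 \<longrightarrow> finite U \<and> even (card U)"
proof (intro allI impI)
    fix U assume nz: "gmul f g U \<noteq> 0"
    then have fin: "finite U" unfolding gmul_def by (auto split: if_splits)
    then obtain S where S: "S \<in> Pow U" "of_int (sg S (U - S)) * f S * g (U - S) \<noteq> 0"
      using nz unfolding gmul_def by (metis (no_types, lifting) sum.neutral)
    then have "f S \<noteq> 0" "g (U - S) \<noteq> 0" by auto
    then have "even (card S)" "even (card (U - S))" using f g by auto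
    moreover have "card U = card S + card (U - S)"
      using S(1) fin by (metis Pow_iff card_Diff_subset finite_subset le_add_diff_inverse card_mono)
    ultimately show "finite U \<and> even (card U)" using fin by simp
qed


definition inv_ev :: "(nat set \<Rightarrow> 'a::comm_ring_1) \<Rightarrow> bool" where
  "inv_ev f \<longleftrightarrow> (\<forall>U. f U \<noteq> 0 \<longrightarrow> finite U \<and> even (card U))"

lemma sg_empty_left: "finite U \<Longrightarrow> sg {} U = 1"
  by (simp add: sg_def srt_def lsign_srt[unfolded srt_def])

lemma gmul_one:
  assumes "inv_ev f"
  shows "gmul (\<lambda>U. if U = {} then 1 else 0) f U = f U"
proof (cases "finite U")
  case True
  have "gmul (\<lambda>U. if U = {} then 1 else 0) f U =
    (\<Sum>S\<in>Pow U. of_int (sg S (U - S)) * (if S = {} then 1 else 0) * f (U - S))"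
    using True by (simp add: gmul_def)
  also have "\<dots> = (\<Sum>S\<in>Pow U. if S = {} then of_int (sg {} U) * f U else 0)"
    by (rule sum.cong) auto
  also have "\<dots> = of_int (sg {} U) * f U"
    by (rule trans[OF sum.delta]) (simp_all add: True)
  finally show ?thesis using True by (simp add: sg_empty_left)
next
  case False
  then show ?thesis using assms unfolding gmul_def inv_ev_def by auto
qed

lemma gmul_comm:
  assumes "inv_ev f" "inv_ev g"
  shows "gmul f g U = gmul g f U"
proof (cases "finite U")
  case True
  have "(\<Sum>S\<in>Pow U. of_int (sg S (U - S)) * g S * f (U - S)) =
        (\<Sum>S\<in>Pow U. of_int (sg (U - S) (U - (U - S))) * g (U - S) * f (U - (U - S)))"
    by (rule sum.reindex_bij_witness[of _ "\<lambda>S. U - S" "\<lambda>S. U - S"]) (auto simp: Diff_Diff_Int Int_absorb1)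
  also have "\<dots> = (\<Sum>S\<in>Pow U. of_int (sg S (U - S)) * f S * g (U - S))"
  proof (rule sum.cong)
    fix S assume S: "S \<in> Pow U"
    then have e: "U - (U - S) = S" by auto
    show "of_int (sg (U - S) (U - (U - S))) * g (U - S) * f (U - (U - S)) =
          of_int (sg S (U - S)) * f S * g (U - S)"
    proof (cases "f S = 0")
      case False
      then have "even (card S)" using assms unfolding inv_ev_def by auto
      then have "sg (U - S) S = sg S (U - S)"
        using sg_commute[of S "U - S"] True S by (auto intro: finite_subset)
      then show ?thesis unfolding e by (simp add: algebra_simps)
    qed (simp add: e)
  qed simp
  finally show ?thesis unfolding gmul_def using True by simp
qed (simp add: gmul_def)

lemma gmul_assoc:
  "gmul (gmul f g) h U = gmul f (gmul g h) U"
proof (cases "finite U")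
  case True
  have L0: "gmul (gmul f g) h U = (\<Sum>A\<in>Pow U. \<Sum>S\<in>Pow A.
      of_int (sg A (U - A)) * of_int (sg S (A - S)) * f S * g (A - S) * h (U - A))"
  proof -
    have "gmul (gmul f g) h U = (\<Sum>A\<in>Pow U. of_int (sg A (U - A)) *
        (\<Sum>S\<in>Pow A. of_int (sg S (A - S)) * f S * g (A - S)) * h (U - A))"
      unfolding gmul_def[of "gmul f g"] if_P[OF True]
      by (intro sum.cong refl) (auto simp: gmul_def intro: finite_subset)
    also have "\<dots> = (\<Sum>A\<in>Pow U. \<Sum>S\<in>Pow A.
      of_int (sg A (U - A)) * of_int (sg S (A - S)) * f S * g (A - S) * h (U - A))"
      by (intro sum.cong refl) (simp add: sum_distrib_left sum_distrib_right algebra_simps)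
    finally show ?thesis .
  qed
  have L: "gmul (gmul f g) h U = (\<Sum>(A, S)\<in>(SIGMA A:Pow U. Pow A).
      of_int (sg A (U - A)) * of_int (sg S (A - S)) * f S * g (A - S) * h (U - A))"
    unfolding L0 using True by (subst sum.Sigma) (auto intro: finite_subset)
  have R0: "gmul f (gmul g h) U = (\<Sum>S\<in>Pow U. \<Sum>B\<in>Pow (U - S).
      of_int (sg S (U - S)) * of_int (sg B (U - S - B)) * f S * g B * h (U - S - B))"
  proof -
    have "gmul f (gmul g h) U = (\<Sum>S\<in>Pow U. of_int (sg S (U - S)) * f S *
        (\<Sum>B\<in>Pow (U - S). of_int (sg B (U - S - B)) * g B * h (U - S - B)))"
      unfolding gmul_def[of f] if_P[OF True]
      by (intro sum.cong refl) (auto simp: gmul_def)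
    also have "\<dots> = (\<Sum>S\<in>Pow U. \<Sum>B\<in>Pow (U - S).
      of_int (sg S (U - S)) * of_int (sg B (U - S - B)) * f S * g B * h (U - S - B))"
      by (intro sum.cong refl) (simp add: sum_distrib_left sum_distrib_right algebra_simps)
    finally show ?thesis .
  qed
  have R: "gmul f (gmul g h) U = (\<Sum>(S, B)\<in>(SIGMA S:Pow U. Pow (U - S)).
      of_int (sg S (U - S)) * of_int (sg B (U - S - B)) * f S * g B * h (U - S - B))"
    unfolding R0 using True by (subst sum.Sigma) auto
  have "(\<Sum>(A, S)\<in>(SIGMA A:Pow U. Pow A).
      of_int (sg A (U - A)) * of_int (sg S (A - S)) * f S * g (A - S) * h (U - A)) =
    (\<Sum>(S, B)\<in>(SIGMA S:Pow U. Pow (U - S)).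
      of_int (sg S (U - S)) * of_int (sg B (U - S - B)) * f S * g B * h (U - S - B))"
  proof (rule sum.reindex_bij_witness[of _ "\<lambda>(S, B). (S \<union> B, S)" "\<lambda>(A, S). (S, A - S)"])
    fix p assume p: "p \<in> (SIGMA A:Pow U. Pow A)"
    obtain A S where pAS: "p = (A, S)" by (cases p)
    with p have AS: "S \<subseteq> A" "A \<subseteq> U" by auto
    then have fin: "finite S" "finite (A - S)" "finite (U - A)" using True by (auto intro: finite_subset)
    have e1: "U - S - (A - S) = U - A" "U - S = (A - S) \<union> (U - A)" "A = S \<union> (A - S)"
      using AS by auto
    have "sg S (A - S) * sg (S \<union> (A - S)) (U - A) = sg (A - S) (U - A) * sg S ((A - S) \<union> (U - A))"
      by (rule sg_assoc) (use fin AS in auto)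
    then have "sg A (U - A) * sg S (A - S) = sg S (U - S) * sg (A - S) (U - S - (A - S))"
      using e1 by (metis mult.commute)
    then have "of_int (sg A (U - A)) * of_int (sg S (A - S)) = 
       (of_int (sg S (U - S)) * of_int (sg (A - S) (U - S - (A - S))) :: 'a)"
      by (metis of_int_mult)
    then show "(case (case p of (A, S) \<Rightarrow> (S, A - S)) of (S, B) \<Rightarrow>
        of_int (sg S (U - S)) * of_int (sg B (U - S - B)) * f S * g B * h (U - S - B)) =
       (case p of (A, S) \<Rightarrow> of_int (sg A (U - A)) * of_int (sg S (A - S)) * f S * g (A - S) * h (U - A))"
      unfolding pAS using e1 by simp
  qed auto
  then show ?thesis using L R by simp
qed (simp add: gmul_def)

lemma gmul_distrib: "gmul (\<lambda>U. f U + g U) h U = gmul f h U + gmul g h U"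
  unfolding gmul_def by (simp add: sum.distrib algebra_simps)

instantiation ev :: (comm_ring_1) comm_ring_1
begin

lift_definition zero_ev :: "'a ev" is "\<lambda>_. 0" by simp
lift_definition one_ev :: "'a ev" is "\<lambda>U. if U = {} then 1 else 0" by (auto split: if_splits)
lift_definition plus_ev :: "'a ev \<Rightarrow> 'a ev \<Rightarrow> 'a ev" is "\<lambda>f g U. f U + g U"
  by (metis add.left_neutral add.right_neutral)
lift_definition uminus_ev :: "'a ev \<Rightarrow> 'a ev" is "\<lambda>f U. - f U" by simp
lift_definition minus_ev :: "'a ev \<Rightarrow> 'a ev \<Rightarrow> 'a ev" is "\<lambda>f g U. f U - g U"
  by (metis diff_self diff_zero)
lift_definition times_ev :: "'a ev \<Rightarrow> 'a ev \<Rightarrow> 'a ev" is gmul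
  using gmul_closed by blast

instance
proof
  fix a b c :: "'a ev"
  show "a * b * c = a * (b * c)" by transfer (simp add: gmul_assoc fun_eq_iff)
  show "a * b = b * a" by transfer (auto simp: gmul_comm inv_ev_def fun_eq_iff)
  show "1 * a = a" by transfer (auto simp: gmul_one inv_ev_def fun_eq_iff)
  show "(a + b) * c = a * c + b * c" by transfer (simp add: gmul_distrib fun_eq_iff)
  show "a + b + c = a + (b + c)" by transfer (simp add: algebra_simps)
  show "a + b = b + a" by transfer (simp add: algebra_simps)
  show "0 + a = a" by transfer simp
  show "- a + a = 0" by transfer simp
  show "a - b = a + - b" by transfer simp
  show "(0::'a ev) \<noteq> 1" by transfer (metis zero_neq_one)
qed

end

lemma gc_mult: "gc (a * b) U = gmul (gc a) (gc b) U" by transfer simp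
lemma gc_add: "gc (a + b) U = gc a U + gc b U" by transfer simp
lemma gc_zero: "gc 0 U = 0" by transfer simp
lemma gc_uminus: "gc (- a) U = - gc a U" by transfer simp
lemma gc_sum: "gc (sum F A) U = (\<Sum>i\<in>A. gc (F i) U)"
  by (induction A rule: infinite_finite_induct) (auto simp: gc_zero gc_add)

lift_definition sc :: "'a::comm_ring_1 \<Rightarrow> 'a ev" is "\<lambda>c U. if U = {} then c else 0"
  by (auto split: if_splits)

lemma gc_sc: "gc (sc c) U = (if U = {} then c else 0)" by transfer simp

lemma gc_sc_mult: "gc (sc c * a) U = c * gc a U"
proof -
  have "gc (sc c * a) U = gmul (\<lambda>U. if U = {} then c else 0) (gc a) U"
    by (simp add: gc_mult gc_sc[abs_def])
  also have "\<dots> = c * gc a U"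
  proof (cases "finite U")
    case True
    have "gmul (\<lambda>U. if U = {} then c else 0) (gc a) U =
      (\<Sum>S\<in>Pow U. if S = {} then c * gc a U else 0)"
      unfolding gmul_def if_P[OF True] by (rule sum.cong) (auto simp: sg_empty_left True)
    also have "\<dots> = c * gc a U"
      by (rule trans[OF sum.delta]) (simp_all add: True)
    finally show ?thesis .
  next
    case False
    then show ?thesis using gc_nz[of a U] by (cases "gc a U = 0") (auto simp: gmul_def)
  qed
  finally show ?thesis .
qed

lemma sc_add: "sc (a + b) = sc a + sc b" by transfer auto
lemma sc_one: "sc 1 = 1" by transfer auto
lemma sc_zero: "sc 0 = 0" by transfer auto
lemma sc_mult: "sc (a * b) = sc a * sc b"
  by (rule gc_eqI) (simp add: gc_sc_mult gc_sc)
lemma sc_sum: "sc (sum f A) = (\<Sum>i\<in>A. sc (f i))"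
  by (induction A rule: infinite_finite_induct) (auto simp: sc_zero sc_add)
lemma of_nat_ev: "(of_nat n :: 'a::comm_ring_1 ev) = sc (of_nat n)"
  by (induction n) (auto simp: sc_zero sc_add sc_one add.commute)

lemma ev_torsion_free:
  fixes a :: "'a::field_char_0 ev"
  assumes "of_nat n * a = 0" "n > 0"
  shows "a = 0"
proof (rule gc_eqI)
  fix U
  have "of_nat n * gc a U = (0::'a)"
    using arg_cong[OF assms(1), of "\<lambda>z. gc z U"] by (simp add: of_nat_ev gc_sc_mult gc_zero)
  then show "gc a U = gc 0 U" using assms(2) by (simp add: gc_zero)
qed

lift_definition bw :: "nat list \<Rightarrow> 'a::comm_ring_1 ev" is
  "\<lambda>w U. if distinct w \<and> even (length w) \<and> U = set w then of_int (lsign w) else 0"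
  by (auto split: if_splits simp: distinct_card)

lemma gc_bw: "gc (bw w) U = (if distinct w \<and> even (length w) \<and> U = set w then of_int (lsign w) else 0)"
  by transfer simp

lemma bw_mult:
  assumes "even (length u)" "even (length v)"
  shows "(bw u * bw v :: 'a::comm_ring_1 ev) = bw (u @ v)"
proof (rule gc_eqI)
  fix U
  let ?c = "distinct u \<and> distinct v \<and> set u \<inter> set v = {} \<and> U = set u \<union> set v"
  have "gc (bw u * bw v :: 'a ev) U = gmul (gc (bw u)) (gc (bw v)) U" by (simp add: gc_mult)
  also have "\<dots> = (if ?c then of_int (lsign (u @ v)) else 0)"
  proof (cases ?c)
    case True
    then have fin: "finite U" by simp
    have "gmul (gc (bw u)) (gc (bw v)) U = (\<Sum>S\<in>Pow U. if S = set u then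
        of_int (sg (set u) (set v)) * of_int (lsign u) * of_int (lsign v) else (0::'a))"
      unfolding gmul_def if_P[OF fin]
    proof (rule sum.cong)
      fix S assume "S \<in> Pow U"
      show "of_int (sg S (U - S)) * gc (bw u) S * gc (bw v) (U - S) = (if S = set u then
        of_int (sg (set u) (set v)) * of_int (lsign u) * of_int (lsign v) else (0::'a))"
      proof (cases "S = set u")
        case True
        moreover have "U - set u = set v" using \<open>?c\<close> by auto
        ultimately show ?thesis using \<open>?c\<close> assms by (simp add: gc_bw)
      qed (simp add: gc_bw)
    qed simp
    also have "\<dots> = of_int (sg (set u) (set v)) * of_int (lsign u) * of_int (lsign v)"
      by (rule trans[OF sum.delta]) (use True in auto)
    also have "\<dots> = of_int (lsign (u @ v))"
      using lsign_append[of u v] True by simp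
    finally show ?thesis using True by simp
  next
    case False
    have z: "of_int (sg S (U - S)) * gc (bw u :: 'a ev) S * gc (bw v :: 'a ev) (U - S) = (0::'a)"
      if S: "S \<subseteq> U" for S
    proof (rule ccontr)
      assume "of_int (sg S (U - S)) * gc (bw u) S * gc (bw v) (U - S) \<noteq> (0::'a)"
      then have "gc (bw u) S \<noteq> (0::'a)" "gc (bw v) (U - S) \<noteq> (0::'a)" by auto
      then have "distinct u" "S = set u" "distinct v" "U - S = set v"
        by (auto simp: gc_bw split: if_splits)
      then have ?c using S by auto
      then show False using False by simp
    qed
    have "gmul (gc (bw u :: 'a ev)) (gc (bw v :: 'a ev)) U = 0"
      unfolding gmul_def by (auto intro!: sum.neutral z)
    then show ?thesis by (simp only: if_not_P[OF False])
  qed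
  also have "\<dots> = gc (bw (u @ v)) U"
    using assms by (auto simp: gc_bw)
  finally show "gc (bw u * bw v :: 'a ev) U = gc (bw (u @ v)) U" .
qed

definition fm :: "nat \<Rightarrow> (nat \<Rightarrow> nat \<Rightarrow> 'a::comm_ring_1) \<Rightarrow> (nat \<Rightarrow> nat \<Rightarrow> 'a) \<Rightarrow> nat \<Rightarrow> nat \<Rightarrow> 'a" where
  "fm d A B = (\<lambda>p q. \<Sum>r<d. A p r * B r q)"

definition fid :: "nat \<Rightarrow> nat \<Rightarrow> 'a::comm_ring_1" where
  "fid = (\<lambda>p q. if p = q then 1 else 0)"

primrec fml :: "nat \<Rightarrow> (nat \<Rightarrow> nat \<Rightarrow> 'a::comm_ring_1) list \<Rightarrow> nat \<Rightarrow> nat \<Rightarrow> 'a" where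
  "fml d [] = fid"
| "fml d (A # As) = fm d A (fml d As)"

definition ftr :: "nat \<Rightarrow> (nat \<Rightarrow> nat \<Rightarrow> 'a::comm_ring_1) \<Rightarrow> 'a" where
  "ftr d A = (\<Sum>p<d. A p p)"

lemma fm_fid_left: "p < d \<Longrightarrow> fm d fid B p q = B p q"
proof -
  assume p: "p < d"
  have "fm d fid B p q = (\<Sum>r<d. if p = r then B r q else 0)"
    unfolding fm_def fid_def by (rule sum.cong) auto
  also have "\<dots> = B p q" using p by (simp add: sum.delta)
  finally show ?thesis .
qed

lemma fm_fid_right: "q < d \<Longrightarrow> fm d B fid p q = B p q"
proof -
  assume q: "q < d"
  have "fm d B fid p q = (\<Sum>r<d. if q = r then B p r else 0)"
    unfolding fm_def fid_def by (rule sum.cong) auto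
  also have "\<dots> = B p q" using q by (simp add: sum.delta)
  finally show ?thesis .
qed

lemma fm_assoc: "fm d (fm d A B) C p q = fm d A (fm d B C) p q"
proof -
  have "fm d (fm d A B) C p q = (\<Sum>s<d. \<Sum>r<d. A p r * B r s * C s q)"
    unfolding fm_def by (simp add: sum_distrib_right)
  also have "\<dots> = (\<Sum>r<d. \<Sum>s<d. A p r * B r s * C s q)" by (rule sum.swap)
  also have "\<dots> = fm d A (fm d B C) p q"
    unfolding fm_def by (simp add: sum_distrib_left mult.assoc)
  finally show ?thesis .
qed

lemma fm_cong: "(\<And>r. r < d \<Longrightarrow> B r q = B' r q) \<Longrightarrow> fm d A B p q = fm d A B' p q"
  unfolding fm_def by simp

lemma fm_cong_left: "(\<And>r. r < d \<Longrightarrow> A p r = A' p r) \<Longrightarrow> fm d A B p q = fm d A' B p q"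
  unfolding fm_def by simp

lemma fml_append: "p < d \<Longrightarrow> fml d (xs @ ys) p q = fm d (fml d xs) (fml d ys) p q"
proof (induction xs arbitrary: p)
  case Nil then show ?case by (simp add: fm_fid_left)
next
  case (Cons x xs)
  have "fml d ((x # xs) @ ys) p q = fm d x (fml d (xs @ ys)) p q" by simp
  also have "\<dots> = fm d x (fm d (fml d xs) (fml d ys)) p q"
    by (rule fm_cong) (simp add: Cons)
  also have "\<dots> = fm d (fml d (x # xs)) (fml d ys) p q" by (simp add: fm_assoc)
  finally show ?case .
qed

lemma fml_single: "q < d \<Longrightarrow> fml d [A] p q = A p q"
  by (simp add: fm_fid_right)

lemma ftr_comm: "ftr d (fm d A B) = ftr d (fm d B A)"
  unfolding ftr_def fm_def by (subst sum.swap) (simp add: mult.commute)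

definition lists_of :: "nat \<Rightarrow> nat \<Rightarrow> nat list set" where
  "lists_of r d = {ws. set ws \<subseteq> {..<d} \<and> length ws = r}"

lemma finite_lists_of: "finite (lists_of r d)"
  unfolding lists_of_def by (rule finite_lists_length_eq) simp

lemma lists_of_Suc: "lists_of (Suc r) d = (\<lambda>(xs, n). n # xs) ` (lists_of r d \<times> {..<d})"
  unfolding lists_of_def by (rule lists_length_Suc_eq)

lemma sum_lists_of_Suc:
  "(\<Sum>ws\<in>lists_of (Suc r) d. F ws) = (\<Sum>w<d. \<Sum>ws\<in>lists_of r d. F (w # ws))"
proof -
  have inj: "inj_on (\<lambda>(xs, n). n # xs) (lists_of r d \<times> {..<d})" by (auto simp: inj_on_def)
  have "(\<Sum>ws\<in>lists_of (Suc r) d. F ws) = (\<Sum>(xs, n)\<in>lists_of r d \<times> {..<d}. F (n # xs))"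
    unfolding lists_of_Suc by (subst sum.reindex[OF inj]) (simp add: case_prod_unfold)
  also have "\<dots> = (\<Sum>ws\<in>lists_of r d. \<Sum>w<d. F (w # ws))"
    by (subst sum.cartesian_product[symmetric]) simp
  also have "\<dots> = (\<Sum>w<d. \<Sum>ws\<in>lists_of r d. F (w # ws))"
    by (rule sum.swap)
  finally show ?thesis .
qed

definition chainP :: "nat \<Rightarrow> (nat \<Rightarrow> nat \<Rightarrow> 'a::comm_ring_1) list \<Rightarrow> nat \<Rightarrow> nat \<Rightarrow> 'a" where
  "chainP d Bs p q = (\<Sum>ws\<in>lists_of (length Bs - 1) d.
      \<Prod>t<length Bs. (Bs ! t) ((ws @ [q]) ! t) ((p # ws) ! t))"

lemma chainP_eq:
  assumes "Bs \<noteq> []" "p < d" "q < d"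
  shows "chainP d Bs p q = fml d (rev Bs) q p"
  using assms
proof (induction Bs arbitrary: p)
  case Nil then show ?case by simp
next
  case (Cons B Bs)
  show ?case
  proof (cases "Bs = []")
    case True
    have "lists_of 0 d = {[]}" by (auto simp: lists_of_def)
    then show ?thesis using True Cons.prems by (simp add: chainP_def fm_fid_right)
  next
    case False
    then obtain m where m: "length Bs = Suc m" by (cases Bs) auto
    have "chainP d (B # Bs) p q = (\<Sum>w<d. \<Sum>ws\<in>lists_of m d.
        \<Prod>t<Suc (length Bs). ((B # Bs) ! t) (((w # ws) @ [q]) ! t) ((p # w # ws) ! t))"
      unfolding chainP_def using m by (simp add: sum_lists_of_Suc)
    also have "\<dots> = (\<Sum>w<d. B w p * chainP d Bs w q)"
    proof (rule sum.cong[OF refl])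
      fix w assume "w \<in> {..<d}"
      show "(\<Sum>ws\<in>lists_of m d. \<Prod>t<Suc (length Bs). ((B # Bs) ! t) (((w # ws) @ [q]) ! t) ((p # w # ws) ! t))
          = B w p * chainP d Bs w q"
        unfolding chainP_def m
        by (simp del: prod.lessThan_Suc add: prod.lessThan_Suc_shift sum_distrib_left)
    qed
    also have "\<dots> = (\<Sum>w<d. fml d (rev Bs) q w * B w p)"
      using Cons.IH[OF False _ Cons.prems(3)] by (simp add: mult.commute)
    also have "\<dots> = fm d (fml d (rev Bs)) (fml d [B]) q p"
      unfolding fm_def using fml_single[of p d B] Cons.prems
      by (intro sum.cong) (auto simp: fml_single)
    also have "\<dots> = fml d (rev (B # Bs)) q p"
      using fml_append[of q d "rev Bs" "[B]" p] Cons.prems by simp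
    finally show ?thesis .
  qed
qed

lemma cyclic_chain:
  assumes "Bs \<noteq> []"
  shows "(\<Sum>vs\<in>lists_of (length Bs) d. \<Prod>t<length Bs. (Bs ! t) (vs ! (Suc t mod length Bs)) (vs ! t))
    = ftr d (fml d (rev Bs))"
proof -
  obtain m where m: "length Bs = Suc m" using assms by (cases Bs) auto
  have "(\<Sum>vs\<in>lists_of (length Bs) d. \<Prod>t<length Bs. (Bs ! t) (vs ! (Suc t mod length Bs)) (vs ! t))
      = (\<Sum>p<d. \<Sum>ws\<in>lists_of m d. \<Prod>t<length Bs. (Bs ! t) ((p # ws) ! (Suc t mod length Bs)) ((p # ws) ! t))"
    unfolding m by (simp add: sum_lists_of_Suc)
  also have "\<dots> = (\<Sum>p<d. chainP d Bs p p)"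
  proof (rule sum.cong[OF refl])
    fix p assume "p \<in> {..<d}"
    show "(\<Sum>ws\<in>lists_of m d. \<Prod>t<length Bs. (Bs ! t) ((p # ws) ! (Suc t mod length Bs)) ((p # ws) ! t))
      = chainP d Bs p p"
      unfolding chainP_def m diff_Suc_1
    proof (rule sum.cong[OF refl], rule prod.cong[OF refl])
      fix ws t assume ws: "ws \<in> lists_of m d" and t: "t \<in> {..<Suc m}"
      have lw: "length ws = m" using ws by (simp add: lists_of_def)
      have "(p # ws) ! (Suc t mod Suc m) = (ws @ [p]) ! t"
      proof (cases "Suc t < Suc m")
        case True then show ?thesis using lw by (simp add: nth_append)
      next
        case False
        then have "t = m" using t by simp
        then show ?thesis using lw by (simp add: nth_append)
      qed
      then show "(Bs ! t) ((p # ws) ! (Suc t mod Suc m)) ((p # ws) ! t) =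
        (Bs ! t) ((ws @ [p]) ! t) ((p # ws) ! t)" by simp
    qed
  qed
  also have "\<dots> = ftr d (fml d (rev Bs))"
    unfolding ftr_def using chainP_eq[OF assms] by simp
  finally show ?thesis .
qed

lemma sum_PiE_split:
  fixes F G :: "(nat \<Rightarrow> nat) \<Rightarrow> 'a::comm_ring_1"
  assumes "C \<subseteq> I" "finite I" "finite K"
    and F: "\<And>i i'. (\<forall>x\<in>C. i x = i' x) \<Longrightarrow> F i = F i'"
    and G: "\<And>i i'. (\<forall>x\<in>I - C. i x = i' x) \<Longrightarrow> G i = G i'"
  shows "(\<Sum>i\<in>PiE I (\<lambda>_. K). F i * G i) =
    (\<Sum>i\<in>PiE C (\<lambda>_. K). F i) * (\<Sum>i\<in>PiE (I - C) (\<lambda>_. K). G i)"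
proof -
  let ?A = "PiE C (\<lambda>_. K)" and ?B = "PiE (I - C) (\<lambda>_. K)"
  have "(\<Sum>i\<in>?A. F i) * (\<Sum>i\<in>?B. G i) = (\<Sum>(a, b)\<in>?A \<times> ?B. F a * G b)"
    by (simp add: sum_product sum.cartesian_product)
  also have "\<dots> = (\<Sum>i\<in>PiE I (\<lambda>_. K). F i * G i)"
  proof (rule sum.reindex_bij_witness[of _ "\<lambda>i. (restrict i C, restrict i (I - C))"
        "\<lambda>(a, b). (\<lambda>x. if x \<in> C then a x else b x)"])
    fix ab assume ab: "ab \<in> ?A \<times> ?B"
    obtain a b where abe: "ab = (a, b)" by (cases ab)
    with ab have a: "a \<in> ?A" and b: "b \<in> ?B" by auto
    show "(restrict (case ab of (a, b) \<Rightarrow> \<lambda>x. if x \<in> C then a x else b x) C,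
           restrict (case ab of (a, b) \<Rightarrow> \<lambda>x. if x \<in> C then a x else b x) (I - C)) = ab"
      unfolding abe using a b by (auto simp: fun_eq_iff PiE_def extensional_def)
    show "(case ab of (a, b) \<Rightarrow> \<lambda>x. if x \<in> C then a x else b x) \<in> PiE I (\<lambda>_. K)"
      unfolding abe using a b assms(1) by (auto simp: PiE_def extensional_def Pi_def)
    show "F (case ab of (a, b) \<Rightarrow> \<lambda>x. if x \<in> C then a x else b x) *
        G (case ab of (a, b) \<Rightarrow> \<lambda>x. if x \<in> C then a x else b x) = (case ab of (a, b) \<Rightarrow> F a * G b)"
      unfolding abe by (simp, intro arg_cong2[where f = "(*)"] F G) auto
  next
    fix i assume i: "i \<in> PiE I (\<lambda>_. K)"
    show "(case (restrict i C, restrict i (I - C)) of (a, b) \<Rightarrow> \<lambda>x. if x \<in> C then a x else b x) = i"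
      using i assms(1) by (auto simp: fun_eq_iff PiE_def extensional_def)
    show "(restrict i C, restrict i (I - C)) \<in> ?A \<times> ?B"
      using i assms(1) by auto
  qed
  finally show ?thesis by simp
qed

lemma sum_PiE_list:
  fixes S :: "nat list" and H :: "nat list \<Rightarrow> 'a::comm_monoid_add"
  assumes "distinct S"
  shows "(\<Sum>i\<in>PiE (set S) (\<lambda>_. {..<d}). H (map i S)) = (\<Sum>vs\<in>lists_of (length S) d. H vs)"
proof (rule sum.reindex_bij_witness[of _ "\<lambda>vs. (\<lambda>x. if x \<in> set S then vs ! idx S x else undefined)"
      "\<lambda>i. map i S"])
  fix i assume i: "i \<in> PiE (set S) (\<lambda>_. {..<d})"
  show "(\<lambda>x. if x \<in> set S then map i S ! idx S x else undefined) = i"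
  proof
    fix x show "(if x \<in> set S then map i S ! idx S x else undefined) = i x"
    proof (cases "x \<in> set S")
      case True
      then obtain t where t: "t < length S" "x = S ! t" by (metis in_set_conv_nth)
      have "idx S x = t" using t assms by (simp add: idx_nth)
      then show ?thesis using True t by simp
    next
      case False then show ?thesis using i by (simp add: PiE_def extensional_def)
    qed
  qed
  have "set (map i S) \<subseteq> {..<d}" using i by (auto simp: PiE_def Pi_def)
  then show "map i S \<in> lists_of (length S) d" by (simp add: lists_of_def)
next
  fix vs assume vs: "vs \<in> lists_of (length S) d"
  then have lv: "length vs = length S" and sv: "set vs \<subseteq> {..<d}" by (auto simp: lists_of_def)
  show "map (\<lambda>x. if x \<in> set S then vs ! idx S x else undefined) S = vs"
  proof (rule nth_equalityI)
    show "length (map (\<lambda>x. if x \<in> set S then vs ! idx S x else undefined) S) = length vs"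
      using lv by simp
    fix t assume "t < length (map (\<lambda>x. if x \<in> set S then vs ! idx S x else undefined) S)"
    then have t: "t < length S" by simp
    have inS: "S ! t \<in> set S" using t by (rule nth_mem)
    have ix: "idx S (S ! t) = t" using t assms by (simp add: idx_nth)
    have "map (\<lambda>x. if x \<in> set S then vs ! idx S x else undefined) S ! t =
      (if S ! t \<in> set S then vs ! idx S (S ! t) else undefined)" using t by (rule nth_map)
    then show "map (\<lambda>x. if x \<in> set S then vs ! idx S x else undefined) S ! t = vs ! t"
      by (simp only: if_P[OF inS] ix)
  qed
  have "vs ! idx S x < d" if "x \<in> set S" for x
  proof -
    from that obtain t where t: "t < length S" "x = S ! t" by (metis in_set_conv_nth)
    have "idx S x = t" unfolding t(2) using t(1) assms by (rule idx_nth[rotated])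
    then have "vs ! idx S x = vs ! t" by simp
    moreover have "vs ! t \<in> set vs" using t lv by (metis nth_mem)
    ultimately show ?thesis using sv by (metis lessThan_iff subsetD)
  qed
  then show "(\<lambda>x. if x \<in> set S then vs ! idx S x else undefined) \<in> PiE (set S) (\<lambda>_. {..<d})"
    by (simp add: PiE_def extensional_def Pi_def)
qed simp

lemma cycle_of_support:
  assumes "permutation \<sigma>"
  shows "cycle_of \<sigma> j = set (support \<sigma> j)"
  unfolding cycle_of_def support_set[OF assms] by auto

lemma cycle_of_subset:
  assumes "\<sigma> permutes A" "j \<in> A"
  shows "cycle_of \<sigma> j \<subseteq> A"
  unfolding cycle_of_def using permutes_in_image[OF permutes_funpow[OF assms(1)]] assms(2) by auto

lemma cycle_of_closed: "x \<in> cycle_of \<sigma> j \<Longrightarrow> \<sigma> x \<in> cycle_of \<sigma> j"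
proof -
  assume "x \<in> cycle_of \<sigma> j"
  then obtain m where "x = (\<sigma> ^^ m) j" unfolding cycle_of_def by auto
  then have "\<sigma> x = (\<sigma> ^^ Suc m) j" by simp
  then show ?thesis unfolding cycle_of_def by blast
qed

lemma cycle_of_self: "j \<in> cycle_of \<sigma> j"
  unfolding cycle_of_def by (auto intro!: exI[of _ 0])

lemma cycle_of_image:
  assumes "\<sigma> permutes A" "finite A" "j \<in> A"
  shows "\<sigma> ` cycle_of \<sigma> j = cycle_of \<sigma> j"
proof (rule endo_inj_surj)
  show "finite (cycle_of \<sigma> j)" using cycle_of_subset[OF assms(1,3)] assms(2) finite_subset by blast
  show "\<sigma> ` cycle_of \<sigma> j \<subseteq> cycle_of \<sigma> j" using cycle_of_closed by blast
  show "inj_on \<sigma> (cycle_of \<sigma> j)" using permutes_inj[OF assms(1)] by (rule inj_on_subset) simp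
qed

lemma cycle_of_compl_closed:
  assumes "\<sigma> permutes A" "finite A" "j \<in> A" "x \<in> A - cycle_of \<sigma> j"
  shows "\<sigma> x \<in> A - cycle_of \<sigma> j"
proof -
  have "\<sigma> x \<in> A" using assms permutes_in_image by fastforce
  moreover have "\<sigma> x \<notin> cycle_of \<sigma> j"
  proof
    assume "\<sigma> x \<in> cycle_of \<sigma> j"
    then obtain y where "y \<in> cycle_of \<sigma> j" "\<sigma> y = \<sigma> x"
      using cycle_of_image[OF assms(1-3)] by (metis imageE)
    then have "y = x" using permutes_inj[OF assms(1)] by (meson injD)
    then show False using assms(4) \<open>y \<in> cycle_of \<sigma> j\<close> by simp
  qed
  ultimately show ?thesis by simp
qed

lemma cycle_of_sym:
  assumes "permutation \<sigma>" "x \<in> cycle_of \<sigma> y"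
  shows "y \<in> cycle_of \<sigma> x"
proof -
  obtain m where m: "x = (\<sigma> ^^ m) y" using assms(2) unfolding cycle_of_def by auto
  obtain N where N: "\<sigma> ^^ N = id" "N > 0" using permutation_is_nilpotent[OF assms(1)] by blast
  have idp: "\<sigma> ^^ (N * m) = id" using N(1) by (metis funpow_mult id_funpow)
  have "N * m \<ge> m" using N(2) by simp
  then have "(\<sigma> ^^ (N * m - m)) x = (\<sigma> ^^ (N * m)) y"
    using m by (metis funpow_add le_add_diff_inverse2 o_apply)
  then show ?thesis unfolding cycle_of_def using idp by auto
qed

lemma support_nth:
  "t < least_power \<sigma> j \<Longrightarrow> support \<sigma> j ! t = (\<sigma> ^^ t) j"
  by simp

lemma support_succ:
  assumes "permutation \<sigma>" "t < least_power \<sigma> j"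
  shows "\<sigma> (support \<sigma> j ! t) = support \<sigma> j ! (Suc t mod least_power \<sigma> j)"
proof (cases "Suc t < least_power \<sigma> j")
  case True then show ?thesis using assms by simp
next
  case False
  then have st: "Suc t = least_power \<sigma> j" using assms by simp
  have "\<sigma> (support \<sigma> j ! t) = (\<sigma> ^^ Suc t) j" using assms(2) by simp
  also have "\<dots> = j" unfolding st by (rule least_power_of_permutation(1)[OF assms(1)])
  also have "\<dots> = support \<sigma> j ! (Suc t mod least_power \<sigma> j)"
    using st least_power_of_permutation(2)[OF assms(1), of j] by simp
  finally show ?thesis .
qed

lemma card_cycle_of:
  assumes "permutation \<sigma>"
  shows "card (cycle_of \<sigma> j) = least_power \<sigma> j"
proof -
  have d: "distinct (support \<sigma> j)" by (rule cycle_of_permutation[OF assms])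
  show ?thesis unfolding cycle_of_support[OF assms] distinct_card[OF d] by simp
qed

lemma isolate_cycle:
  fixes A :: "nat \<Rightarrow> nat \<Rightarrow> nat \<Rightarrow> 'a::comm_ring_1"
  assumes sp: "\<sigma> permutes {0..<n}" and j0: "j0 < n"
  shows "(\<Sum>i\<in>tidx d n. \<Prod>j<n. A j (i (\<sigma> j)) (i j)) =
    (\<Sum>i\<in>PiE ({0..<n} - cycle_of \<sigma> j0) (\<lambda>_. {0..<d}). \<Prod>j\<in>{0..<n} - cycle_of \<sigma> j0. A j (i (\<sigma> j)) (i j)) *
    ftr d (fml d (rev (map (\<lambda>t. A ((\<sigma> ^^ t) j0)) [0..<card (cycle_of \<sigma> j0)])))"
proof -
  define c where "c = cycle_of \<sigma> j0"
  have perm: "permutation \<sigma>" using sp permutation_permutes by blast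
  define S where "S = support \<sigma> j0"
  define r where "r = least_power \<sigma> j0"
  have dS: "distinct S" unfolding S_def by (rule cycle_of_permutation[OF perm])
  have sS: "set S = c" unfolding S_def c_def by (simp add: cycle_of_support[OF perm])
  have lS: "length S = r" unfolding S_def r_def by simp
  have cr: "card c = r" unfolding c_def r_def by (rule card_cycle_of[OF perm])
  have r0: "r > 0" unfolding r_def using least_power_of_permutation(2)[OF perm] by simp
  have csub: "c \<subseteq> {0..<n}" unfolding c_def using cycle_of_subset[OF sp] j0 by simp
  have prod_split: "(\<Prod>j<n. A j (i (\<sigma> j)) (i j)) =
      (\<Prod>j\<in>c. A j (i (\<sigma> j)) (i j)) * (\<Prod>j\<in>{0..<n} - c. A j (i (\<sigma> j)) (i j))" for i
  proof -
    have "{..<n} = c \<union> ({0..<n} - c)" using csub by auto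
    then show ?thesis by (simp add: prod.union_disjoint[symmetric] finite_subset[OF csub])
  qed
  have "(\<Sum>i\<in>tidx d n. \<Prod>j<n. A j (i (\<sigma> j)) (i j)) =
     (\<Sum>i\<in>PiE {0..<n} (\<lambda>_. {0..<d}). (\<Prod>j\<in>c. A j (i (\<sigma> j)) (i j)) * (\<Prod>j\<in>{0..<n} - c. A j (i (\<sigma> j)) (i j)))"
    unfolding tidx_def prod_split by simp
  also have "\<dots> = (\<Sum>i\<in>PiE c (\<lambda>_. {0..<d}). \<Prod>j\<in>c. A j (i (\<sigma> j)) (i j)) *
      (\<Sum>i\<in>PiE ({0..<n} - c) (\<lambda>_. {0..<d}). \<Prod>j\<in>{0..<n} - c. A j (i (\<sigma> j)) (i j))"
  proof (rule sum_PiE_split[OF csub])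
    fix i i' :: "nat \<Rightarrow> nat" assume "\<forall>x\<in>c. i x = i' x"
    moreover have "\<sigma> x \<in> c" if "x \<in> c" for x using that cycle_of_closed unfolding c_def by blast
    ultimately show "(\<Prod>j\<in>c. A j (i (\<sigma> j)) (i j)) = (\<Prod>j\<in>c. A j (i' (\<sigma> j)) (i' j))"
      by (intro prod.cong) auto
  next
    fix i i' :: "nat \<Rightarrow> nat" assume "\<forall>x\<in>{0..<n} - c. i x = i' x"
    moreover have "\<sigma> x \<in> {0..<n} - c" if "x \<in> {0..<n} - c" for x
      using cycle_of_compl_closed[OF sp _ _ that[unfolded c_def]] j0 unfolding c_def by simp
    ultimately show "(\<Prod>j\<in>{0..<n} - c. A j (i (\<sigma> j)) (i j)) = (\<Prod>j\<in>{0..<n} - c. A j (i' (\<sigma> j)) (i' j))"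
      by (intro prod.cong) auto
  qed auto
  also have "(\<Sum>i\<in>PiE c (\<lambda>_. {0..<d}). \<Prod>j\<in>c. A j (i (\<sigma> j)) (i j)) =
      ftr d (fml d (rev (map (\<lambda>t. A ((\<sigma> ^^ t) j0)) [0..<r])))"
  proof -
    define Bs where "Bs = map (\<lambda>t. A ((\<sigma> ^^ t) j0)) [0..<r]"
    have lB: "length Bs = r" unfolding Bs_def by simp
    have Bnth: "Bs ! t = A (S ! t)" if "t < r" for t
      unfolding Bs_def S_def r_def using that r_def by simp
    have "(\<Prod>j\<in>c. A j (i (\<sigma> j)) (i j)) =
        (\<Prod>t<r. (Bs ! t) (map i S ! (Suc t mod r)) (map i S ! t))" for i
    proof -
      have "(\<Prod>j\<in>c. A j (i (\<sigma> j)) (i j)) = (\<Prod>t<r. A (S ! t) (i (\<sigma> (S ! t))) (i (S ! t)))"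
      proof -
        have "inj_on ((!) S) {..<r}" using dS lS by (simp add: inj_on_def nth_eq_iff_index_eq)
        moreover have "(!) S ` {..<r} = c" using sS lS by (auto simp: in_set_conv_nth)
        ultimately show ?thesis by (metis (no_types, lifting) prod.reindex_cong)
      qed
      also have "\<dots> = (\<Prod>t<r. (Bs ! t) (map i S ! (Suc t mod r)) (map i S ! t))"
      proof (rule prod.cong[OF refl])
        fix t assume t: "t \<in> {..<r}"
        have "\<sigma> (S ! t) = S ! (Suc t mod r)" unfolding S_def r_def
          by (rule support_succ[OF perm]) (use t r_def in simp)
        moreover have "Suc t mod r < r" using r0 by simp
        ultimately show "A (S ! t) (i (\<sigma> (S ! t))) (i (S ! t)) = (Bs ! t) (map i S ! (Suc t mod r)) (map i S ! t)"
          using t lS Bnth by simp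
      qed
      finally show ?thesis .
    qed
    then have "(\<Sum>i\<in>PiE c (\<lambda>_. {0..<d}). \<Prod>j\<in>c. A j (i (\<sigma> j)) (i j)) =
        (\<Sum>i\<in>PiE (set S) (\<lambda>_. {..<d}). \<Prod>t<r. (Bs ! t) (map i S ! (Suc t mod r)) (map i S ! t))"
      using sS by (simp add: atLeast0LessThan)
    also have "\<dots> = (\<Sum>vs\<in>lists_of r d. \<Prod>t<r. (Bs ! t) (vs ! (Suc t mod r)) (vs ! t))"
      using sum_PiE_list[OF dS, where d=d and H="\<lambda>vs. \<Prod>t<r. (Bs ! t) (vs ! (Suc t mod r)) (vs ! t)"] lS by simp
    also have "\<dots> = ftr d (fml d (rev Bs))"
      using cyclic_chain[of Bs d] lB r0 by auto
    finally show ?thesis unfolding Bs_def .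
  qed
  finally show ?thesis unfolding c_def cr[unfolded c_def] by (simp add: mult.commute)
qed

section \<open>Nilpotency from vanishing traces\<close>

definition fpow :: "nat \<Rightarrow> (nat \<Rightarrow> nat \<Rightarrow> 'a::comm_ring_1) \<Rightarrow> nat \<Rightarrow> nat \<Rightarrow> nat \<Rightarrow> 'a" where
  "fpow d N j = fml d (replicate j N)"

lemma sum_permutations_compose_left:
  assumes q: "q permutes S" and inv: "q \<circ> q = id"
  shows "sum f {p. p permutes S} = sum (\<lambda>p. f (q \<circ> p)) {p. p permutes S}"
proof (rule sum.reindex_bij_witness[of _ "\<lambda>p. q \<circ> p" "\<lambda>p. q \<circ> p"])
  fix p assume "p \<in> {p. p permutes S}"
  then show "q \<circ> (q \<circ> p) = p" "q \<circ> p \<in> {p. p permutes S}"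
    using inv q by (auto simp: o_assoc permutes_compose)
qed (use q inv in \<open>auto simp: o_assoc permutes_compose\<close>)

lemma antisym_vanish:
  fixes A :: "nat \<Rightarrow> nat \<Rightarrow> nat \<Rightarrow> 'a::comm_ring_1"
  assumes tf: "\<forall>m (z::'a). m > 0 \<longrightarrow> of_nat m * z = 0 \<longrightarrow> z = 0"
    and nd: "n > d" and i: "i \<in> tidx d n"
  shows "(\<Sum>\<sigma>\<in>{\<sigma>. \<sigma> permutes {0..<n}}. of_int (sign \<sigma>) * (\<Prod>j<n. A j (i (\<sigma> j)) (i j))) = 0"
proof -
  have "\<not> inj_on i {0..<n}"
  proof
    assume "inj_on i {0..<n}"
    then have "card (i ` {0..<n}) = n" by (simp add: card_image)
    moreover have "i ` {0..<n} \<subseteq> {0..<d}" using i by (auto simp: tidx_def PiE_def Pi_def)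
    then have "card (i ` {0..<n}) \<le> d" by (metis card_atLeastLessThan card_mono finite_atLeastLessThan diff_zero)
    ultimately show False using nd by simp
  qed
  then obtain u v where uv: "u < n" "v < n" "u \<noteq> v" "i u = i v"
    unfolding inj_on_def by auto
  define \<tau> where "\<tau> = Transposition.transpose u v"
  have tp: "\<tau> permutes {0..<n}" unfolding \<tau>_def using uv by (simp add: permutes_swap_id)
  have ti: "\<tau> \<circ> \<tau> = id" unfolding \<tau>_def by simp
  have it: "i (\<tau> x) = i x" for x unfolding \<tau>_def using uv by (cases "x = u \<or> x = v") auto
  define f where "f = (\<lambda>\<sigma>. of_int (sign \<sigma>) * (\<Prod>j<n. A j (i (\<sigma> j)) (i j)))"
  have "sum f {\<sigma>. \<sigma> permutes {0..<n}} = sum (\<lambda>\<sigma>. f (\<tau> \<circ> \<sigma>)) {\<sigma>. \<sigma> permutes {0..<n}}"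
    by (rule sum_permutations_compose_left[OF tp ti])
  also have "\<dots> = sum (\<lambda>\<sigma>. - f \<sigma>) {\<sigma>. \<sigma> permutes {0..<n}}"
  proof (rule sum.cong[OF refl])
    fix \<sigma> assume "\<sigma> \<in> {\<sigma>. \<sigma> permutes {0..<n}}"
    then have sp: "\<sigma> permutes {0..<n}" by simp
    have pt: "permutation \<tau>" using tp permutation_permutes by blast
    have ps: "permutation \<sigma>" using sp permutation_permutes by blast
    have "sign (\<tau> \<circ> \<sigma>) = sign \<tau> * sign \<sigma>" by (rule sign_compose[OF pt ps])
    moreover have "sign \<tau> = -1" unfolding \<tau>_def using uv by (simp add: sign_swap_id)
    ultimately have "sign (\<tau> \<circ> \<sigma>) = - sign \<sigma>" by simp
    then show "f (\<tau> \<circ> \<sigma>) = - f \<sigma>" unfolding f_def by (simp add: it)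
  qed
  also have "\<dots> = - sum f {\<sigma>. \<sigma> permutes {0..<n}}" by (simp add: sum_negf)
  finally have "of_nat 2 * sum f {\<sigma>. \<sigma> permutes {0..<n}} = 0" by simp
  then show ?thesis using tf[rule_format, of 2] unfolding f_def by simp
qed

lemma full_cycle_sign:
  assumes sp: "\<sigma> permutes {0..<n}" and full: "cycle_of \<sigma> 0 = {0..<n}"
  shows "sign \<sigma> = (-1) ^ (n - 1)"
proof -
  have perm: "permutation \<sigma>" using sp permutation_permutes by blast
  let ?S = "support \<sigma> 0"
  have sS: "set ?S = {0..<n}" using full cycle_of_support[OF perm] by simp
  have dS: "distinct ?S" by (rule cycle_of_permutation[OF perm])
  have lS: "length ?S = n" using distinct_card[OF dS] sS by simp
  have "\<sigma> = cycle_of_list ?S"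
  proof
    fix x show "\<sigma> x = cycle_of_list ?S x"
    proof (cases "x \<in> set ?S")
      case True then show ?thesis by (rule cycle_restrict[OF perm])
    next
      case False
      then have "x \<notin> {0..<n}" using sS by simp
      then show ?thesis using False sp by (simp add: permutes_not_in id_outside_supp)
    qed
  qed
  then show ?thesis using sign_cycle_of_list[OF dS] lS by simp
qed

lemma full_cycle_exists:
  assumes "n > 0"
  shows "cycle_of_list [0..<n] permutes {0..<n} \<and> cycle_of (cycle_of_list [0..<n]) 0 = {0..<n}"
proof
  let ?c = "cycle_of_list [0..<n]"
  show cp: "?c permutes {0..<n}" using cycle_permutes[of "[0..<n]"] by simp
  show "cycle_of ?c 0 = {0..<n}"
  proof
    show "cycle_of ?c 0 \<subseteq> {0..<n}" using cycle_of_subset[OF cp] assms by simp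
    show "{0..<n} \<subseteq> cycle_of ?c 0"
    proof
      fix m assume m: "m \<in> {0..<n}"
      have "map (?c ^^ m) [0..<n] = rotate m [0..<n]" by (rule cyclic_rotation) simp
      then have "(?c ^^ m) ([0..<n] ! 0) = rotate m [0..<n] ! 0"
        by (metis assms length_upt minus_nat.diff_0 nth_map)
      also have "\<dots> = m" using m assms by (simp add: nth_rotate)
      finally have "(?c ^^ m) 0 = m" using assms by simp
      then show "m \<in> cycle_of ?c 0" unfolding cycle_of_def by (metis (mono_tags, lifting) mem_Collect_eq)
    qed
  qed
qed

lemma ftr_fpow_E:
  assumes "a < d" "b < d"
  shows "ftr d (fml d (replicate m N @ [(\<lambda>p q. if p = a \<and> q = b then 1 else 0)])) = fpow d N m b a"
proof -
  let ?E = "(\<lambda>p q. if p = a \<and> q = b then 1 else (0::'a))"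
  have "ftr d (fml d (replicate m N @ [?E])) = (\<Sum>p<d. fm d (fpow d N m) (fml d [?E]) p p)"
    unfolding ftr_def fpow_def by (rule sum.cong) (auto simp: fml_append)
  also have "\<dots> = (\<Sum>p<d. \<Sum>r<d. fpow d N m p r * ?E r p)"
    unfolding fm_def by (rule sum.cong[OF refl], rule sum.cong[OF refl]) (simp add: fm_fid_right)
  also have "\<dots> = (\<Sum>p<d. if p = b then fpow d N m p a else 0)"
  proof (rule sum.cong[OF refl])
    fix p assume "p \<in> {..<d}"
    have "(\<Sum>r<d. fpow d N m p r * ?E r p) = (\<Sum>r<d. if r = a then (if p = b then fpow d N m p a else 0) else 0)"
      by (rule sum.cong) auto
    also have "\<dots> = (if p = b then fpow d N m p a else 0)" using assms by (simp add: sum.delta')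
    finally show "(\<Sum>r<d. fpow d N m p r * ?E r p) = (if p = b then fpow d N m p a else 0)" .
  qed
  also have "\<dots> = fpow d N m b a" using assms by (simp add: sum.delta')
  finally show ?thesis .
qed

lemma nilpotent_trace:
  fixes N :: "nat \<Rightarrow> nat \<Rightarrow> 'a::comm_ring_1"
  assumes tf: "\<forall>m (z::'a). m > 0 \<longrightarrow> of_nat m * z = 0 \<longrightarrow> z = 0"
    and tr: "\<And>j. j \<ge> 1 \<Longrightarrow> ftr d (fpow d N j) = 0"
    and ab: "a < d" "b < d"
  shows "fpow d N d b a = 0"
proof -
  define n where "n = Suc d"
  define E where "E = (\<lambda>p q. if p = a \<and> q = b then 1 else (0::'a))"
  define A where "A = (\<lambda>j::nat. if j = 0 then E else N)"
  define T where "T = (\<lambda>\<sigma>. \<Sum>i\<in>tidx d n. \<Prod>j<n. A j (i (\<sigma> j)) (i j))"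
  define P where "P = {\<sigma>. \<sigma> permutes {0..<n}}"
  define Full where "Full = {\<sigma> \<in> P. cycle_of \<sigma> 0 = {0..<n}}"
  define X where "X = fpow d N d b a"
  have finP: "finite P" unfolding P_def by (rule finite_permutations) simp
  have z: "(\<Sum>\<sigma>\<in>P. of_int (sign \<sigma>) * T \<sigma>) = 0"
  proof -
    have "(\<Sum>\<sigma>\<in>P. of_int (sign \<sigma>) * T \<sigma>) =
        (\<Sum>i\<in>tidx d n. \<Sum>\<sigma>\<in>P. of_int (sign \<sigma>) * (\<Prod>j<n. A j (i (\<sigma> j)) (i j)))"
      unfolding T_def sum_distrib_left by (rule sum.swap)
    also have "\<dots> = 0"
    proof (rule sum.neutral, rule ballI)
      fix i assume i: "i \<in> tidx d n"
      have nd: "n > d" by (simp add: n_def)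
      show "(\<Sum>\<sigma>\<in>P. of_int (sign \<sigma>) * (\<Prod>j<n. A j (i (\<sigma> j)) (i j))) = 0"
        unfolding P_def by (rule antisym_vanish[OF tf nd i])
    qed
    finally show ?thesis .
  qed
  have Tfull: "T \<sigma> = X" if sF: "\<sigma> \<in> Full" for \<sigma>
  proof -
    have sp: "\<sigma> permutes {0..<n}" and full: "cycle_of \<sigma> 0 = {0..<n}"
      using sF by (auto simp: Full_def P_def)
    have perm: "permutation \<sigma>" using sp permutation_permutes by blast
    have lp: "least_power \<sigma> 0 = n" using card_cycle_of[OF perm, of 0] full by simp
    have ml: "map (\<lambda>t. A ((\<sigma> ^^ t) 0)) [0..<n] = E # replicate d N"
    proof (rule nth_equalityI)
      show "length (map (\<lambda>t. A ((\<sigma> ^^ t) 0)) [0..<n]) = length (E # replicate d N)"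
        by (simp add: n_def)
      fix t assume "t < length (map (\<lambda>t. A ((\<sigma> ^^ t) 0)) [0..<n])"
      then have t: "t < n" by simp
      show "map (\<lambda>t. A ((\<sigma> ^^ t) 0)) [0..<n] ! t = (E # replicate d N) ! t"
      proof (cases "t = 0")
        case True then show ?thesis using t by (simp add: A_def)
      next
        case False
        have d: "distinct (support \<sigma> 0)" by (rule cycle_of_permutation[OF perm])
        have "(\<sigma> ^^ t) 0 \<noteq> 0"
          using nth_eq_iff_index_eq[OF d, of t 0] t False lp by simp
        moreover have "map (\<lambda>t. A ((\<sigma> ^^ t) 0)) [0..<n] ! t = A ((\<sigma> ^^ t) 0)"
          using t by (simp del: upt_Suc)
        moreover have "(E # replicate d N) ! t = N" using t False by (simp add: n_def nth_Cons')
        ultimately show ?thesis by (simp add: A_def)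
      qed
    qed
    have "T \<sigma> = (\<Sum>i\<in>PiE ({0..<n} - cycle_of \<sigma> 0) (\<lambda>_. {0..<d}).
          \<Prod>j\<in>{0..<n} - cycle_of \<sigma> 0. A j (i (\<sigma> j)) (i j)) *
        ftr d (fml d (rev (map (\<lambda>t. A ((\<sigma> ^^ t) 0)) [0..<card (cycle_of \<sigma> 0)])))"
      unfolding T_def by (rule isolate_cycle[OF sp]) (simp add: n_def)
    also have "\<dots> = ftr d (fml d (replicate d N @ [E]))"
      using full ml by simp
    also have "\<dots> = X" unfolding X_def E_def by (rule ftr_fpow_E[OF ab])
    finally show ?thesis .
  qed
  have Tnon: "T \<sigma> = 0" if sP: "\<sigma> \<in> P" and nF: "\<sigma> \<notin> Full" for \<sigma>
  proof -
    have sp: "\<sigma> permutes {0..<n}" using sP by (simp add: P_def)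
    have perm: "permutation \<sigma>" using sp permutation_permutes by blast
    have sub: "cycle_of \<sigma> 0 \<subseteq> {0..<n}" using cycle_of_subset[OF sp] by (simp add: n_def)
    have neq: "cycle_of \<sigma> 0 \<noteq> {0..<n}" using nF sP by (simp add: Full_def)
    have "\<not> {0..<n} \<subseteq> cycle_of \<sigma> 0" using sub neq by blast
    then obtain j0 where j0': "j0 \<in> {0..<n}" "j0 \<notin> cycle_of \<sigma> 0" by blast
    then have j0: "j0 < n" "j0 \<notin> cycle_of \<sigma> 0" by auto
    have n0: "0 \<notin> cycle_of \<sigma> j0"
    proof
      assume "0 \<in> cycle_of \<sigma> j0"
      then have "j0 \<in> cycle_of \<sigma> 0" by (rule cycle_of_sym[OF perm])
      then show False using j0(2) by simp
    qed
    define r where "r = card (cycle_of \<sigma> j0)"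
    have r1: "r \<ge> 1"
    proof -
      have fin: "finite (cycle_of \<sigma> j0)"
        using cycle_of_subset[OF sp, of j0] j0 by (meson finite_atLeastLessThan finite_subset atLeastLessThan_iff zero_le)
      have "cycle_of \<sigma> j0 \<noteq> {}" using cycle_of_self[of j0 \<sigma>] by auto
      then have "card (cycle_of \<sigma> j0) > 0" using fin by (simp add: card_gt_0_iff)
      then show ?thesis unfolding r_def by simp
    qed
    have ml: "map (\<lambda>t. A ((\<sigma> ^^ t) j0)) [0..<r] = replicate r N"
    proof (rule nth_equalityI)
      fix t assume "t < length (map (\<lambda>t. A ((\<sigma> ^^ t) j0)) [0..<r])"
      then have t: "t < r" by simp
      have "(\<sigma> ^^ t) j0 \<in> cycle_of \<sigma> j0" unfolding cycle_of_def by blast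
      then have "(\<sigma> ^^ t) j0 \<noteq> 0" using n0 by metis
      then show "map (\<lambda>t. A ((\<sigma> ^^ t) j0)) [0..<r] ! t = replicate r N ! t" using t by (simp add: A_def)
    qed simp
    have "T \<sigma> = (\<Sum>i\<in>PiE ({0..<n} - cycle_of \<sigma> j0) (\<lambda>_. {0..<d}).
          \<Prod>j\<in>{0..<n} - cycle_of \<sigma> j0. A j (i (\<sigma> j)) (i j)) *
        ftr d (fml d (rev (map (\<lambda>t. A ((\<sigma> ^^ t) j0)) [0..<card (cycle_of \<sigma> j0)])))"
      unfolding T_def by (rule isolate_cycle[OF sp j0(1)])
    also have "ftr d (fml d (rev (map (\<lambda>t. A ((\<sigma> ^^ t) j0)) [0..<card (cycle_of \<sigma> j0)]))) = 0"
      using ml tr[OF r1] unfolding r_def[symmetric] fpow_def by simp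
    finally show ?thesis by simp
  qed
  have sfull: "sign \<sigma> = (-1) ^ d" if "\<sigma> \<in> Full" for \<sigma>
    using full_cycle_sign[of \<sigma> n] that by (simp add: Full_def P_def n_def)
  have "(\<Sum>\<sigma>\<in>P. of_int (sign \<sigma>) * T \<sigma>) = (\<Sum>\<sigma>\<in>P. if \<sigma> \<in> Full then (-1) ^ d * X else 0)"
    by (rule sum.cong[OF refl]) (auto simp: Tfull Tnon sfull)
  also have "\<dots> = (\<Sum>\<sigma>\<in>Full. (-1) ^ d * X)"
  proof -
    have "P \<inter> Full = Full" unfolding Full_def by auto
    then show ?thesis using sum.inter_restrict[OF finP, of "\<lambda>_. (-1) ^ d * X" Full] by simp
  qed
  also have "\<dots> = of_nat (card Full) * ((-1) ^ d * X)" by simp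
  finally have "of_nat (card Full) * ((-1) ^ d * X) = 0" using z by simp
  moreover have "card Full > 0"
  proof -
    have "cycle_of_list [0..<n] \<in> Full"
      using full_cycle_exists[of n] by (simp add: Full_def P_def n_def)
    moreover have "finite Full" using finP unfolding Full_def by simp
    ultimately show ?thesis by (auto simp: card_gt_0_iff)
  qed
  ultimately have "(-1) ^ d * X = 0" by (rule tf[rule_format, rotated])
  moreover have "(-1) ^ d * ((-1) ^ d * X) = X"
    by (simp add: mult.assoc[symmetric] power_mult_distrib[symmetric])
  ultimately show ?thesis unfolding X_def by (metis mult_zero_right)
qed

definition lists_on :: "nat set \<Rightarrow> nat \<Rightarrow> nat list set" where
  "lists_on A m = {ws. set ws \<subseteq> A \<and> length ws = m}"

lemma finite_lists_on: "finite A \<Longrightarrow> finite (lists_on A m)"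
  unfolding lists_on_def by (rule finite_lists_length_eq)

lemma sum_lists_on_Suc:
  assumes "finite A"
  shows "(\<Sum>ws\<in>lists_on A (Suc r). F ws) = (\<Sum>w\<in>A. \<Sum>ws\<in>lists_on A r. F (w # ws))"
proof -
  have inj: "inj_on (\<lambda>(xs, n). n # xs) (lists_on A r \<times> A)" by (auto simp: inj_on_def)
  have "(\<Sum>ws\<in>lists_on A (Suc r). F ws) = (\<Sum>(xs, n)\<in>lists_on A r \<times> A. F (n # xs))"
    unfolding lists_on_def lists_length_Suc_eq[of A r]
    by (subst sum.reindex[OF inj[unfolded lists_on_def]]) (simp add: case_prod_unfold)
  also have "\<dots> = (\<Sum>ws\<in>lists_on A r. \<Sum>w\<in>A. F (w # ws))"
    by (subst sum.cartesian_product[symmetric]) simp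
  also have "\<dots> = (\<Sum>w\<in>A. \<Sum>ws\<in>lists_on A r. F (w # ws))"
    by (rule sum.swap)
  finally show ?thesis .
qed

lemma lists_on_0: "lists_on A 0 = {[]}" by (auto simp: lists_on_def)

definition W :: "nat \<Rightarrow> (nat \<Rightarrow> nat \<Rightarrow> nat \<Rightarrow> 'a::comm_ring_1) \<Rightarrow> nat list \<Rightarrow> nat \<Rightarrow> nat \<Rightarrow> 'a" where
  "W d z w = fml d (map z w)"

lemma W_Cons: "W d z (a # w) = fm d (z a) (W d z w)"
  by (simp add: W_def)

lemma ftr_W_rotate1:
  "ftr d (W d z (rotate1 w)) = ftr d (W d z w)"
proof (cases w)
  case (Cons a u)
  have "ftr d (W d z (u @ [a])) = (\<Sum>p<d. fm d (W d z u) (fml d [z a]) p p)"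
    unfolding ftr_def W_def by (rule sum.cong) (auto simp: fml_append)
  also have "\<dots> = ftr d (fm d (W d z u) (z a))"
    unfolding ftr_def fm_def by (intro sum.cong refl) (simp add: fm_fid_right)
  also have "\<dots> = ftr d (fm d (z a) (W d z u))" by (rule ftr_comm)
  finally show ?thesis using Cons by (simp add: W_Cons)
qed simp

lemma averaging:
  fixes G :: "(nat \<Rightarrow> nat) \<Rightarrow> 'a::field_char_0"
  assumes fin: "finite S" and PS: "P \<subseteq> S"
    and h: "\<And>\<tau>. \<tau> permutes S \<Longrightarrow> (\<Sum>\<pi>\<in>{\<pi>. \<pi> permutes P}. of_int (sign \<pi>) * G (\<tau> \<circ> \<pi>)) = 0"
  shows "(\<Sum>\<tau>\<in>{\<tau>. \<tau> permutes S}. of_int (sign \<tau>) * G \<tau>) = 0"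
proof -
  let ?Q = "{\<pi>. \<pi> permutes P}" and ?R = "{\<tau>. \<tau> permutes S}"
  let ?L = "(\<Sum>\<tau>\<in>?R. of_int (sign \<tau>) * G \<tau>)"
  have finP: "finite P" using fin PS finite_subset by blast
  have eq: "?L = (\<Sum>\<tau>\<in>?R. of_int (sign \<tau>) * (of_int (sign \<pi>) * G (\<tau> \<circ> \<pi>)))" if "\<pi> \<in> ?Q" for \<pi>
  proof -
    have pS: "\<pi> permutes S" using that PS permutes_subset by blast
    have "?L = (\<Sum>\<tau>\<in>?R. of_int (sign (\<tau> \<circ> \<pi>)) * G (\<tau> \<circ> \<pi>))"
      by (rule sum_permutations_compose_right[OF pS])
    also have "\<dots> = (\<Sum>\<tau>\<in>?R. of_int (sign \<tau>) * (of_int (sign \<pi>) * G (\<tau> \<circ> \<pi>)))"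
    proof (rule sum.cong[OF refl])
      fix \<tau> assume "\<tau> \<in> ?R"
      then have "sign (\<tau> \<circ> \<pi>) = sign \<tau> * sign \<pi>"
        using pS fin by (intro sign_compose) (auto simp: permutation_permutes)
      then show "of_int (sign (\<tau> \<circ> \<pi>)) * G (\<tau> \<circ> \<pi>) = of_int (sign \<tau>) * (of_int (sign \<pi>) * G (\<tau> \<circ> \<pi>))"
        by simp
    qed
    finally show ?thesis .
  qed
  have "of_nat (card ?Q) * ?L = (\<Sum>\<pi>\<in>?Q. ?L)" by simp
  also have "\<dots> = (\<Sum>\<pi>\<in>?Q. \<Sum>\<tau>\<in>?R. of_int (sign \<tau>) * (of_int (sign \<pi>) * G (\<tau> \<circ> \<pi>)))"
    by (rule sum.cong[OF refl]) (rule eq)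
  also have "\<dots> = (\<Sum>\<tau>\<in>?R. of_int (sign \<tau>) * (\<Sum>\<pi>\<in>?Q. of_int (sign \<pi>) * G (\<tau> \<circ> \<pi>)))"
    by (subst sum.swap) (simp add: sum_distrib_left)
  also have "\<dots> = 0" using h by simp
  finally have "of_nat (card ?Q) * ?L = 0" .
  moreover have "card ?Q = fact (card P)" by (rule card_permutations[OF refl finP])
  ultimately show ?thesis by simp
qed

section \<open>The Amitsur--Levitzki theorem (Rosset's proof)\<close>

definition Zm :: "nat \<Rightarrow> (nat \<Rightarrow> nat \<Rightarrow> nat \<Rightarrow> 'a::comm_ring_1) \<Rightarrow> nat set \<Rightarrow> nat \<Rightarrow> nat \<Rightarrow> 'a ev" where
  "Zm d z A = (\<lambda>p q. \<Sum>a\<in>A. \<Sum>b\<in>A. sc (fm d (z a) (z b) p q) * bw [a, b])"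

lemma bw_Nil: "(bw [] :: 'a::comm_ring_1 ev) = 1"
proof (rule gc_eqI)
  fix U
  have "lsign [] = 1" using lsign_srt[of "{}"] by (simp add: srt_def)
  then show "gc (bw [] :: 'a ev) U = gc 1 U" by (simp add: gc_bw one_ev.rep_eq)
qed

lemma sc_bw_mult:
  assumes "even (length u)" "even (length v)"
  shows "sc x * bw u * (sc y * bw v) = sc (x * y) * (bw (u @ v) :: 'a::comm_ring_1 ev)"
proof -
  have "sc x * bw u * (sc y * bw v) = (sc x * sc y) * (bw u * (bw v :: 'a ev))" by (simp only: ac_simps)
  then show ?thesis by (simp only: bw_mult[OF assms] sc_mult)
qed

lemma Zpow:
  fixes z :: "nat \<Rightarrow> nat \<Rightarrow> nat \<Rightarrow> 'a::comm_ring_1"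
  assumes fin: "finite A"
  shows "p < d \<Longrightarrow> fpow d (Zm d z A) m p q = (\<Sum>w\<in>lists_on A (2 * m). sc (W d z w p q) * bw w)"
proof (induction m arbitrary: p q)
  case 0
  have "fpow d (Zm d z A) 0 p q = sc (fid p q)"
    by (simp add: fpow_def fid_def sc_one sc_zero)
  moreover have "W d z [] p q = fid p q" by (simp add: W_def)
  ultimately show ?case by (simp add: lists_on_0 bw_Nil)
next
  case (Suc m)
  let ?LW = "lists_on A (2 * m)"
  have "fpow d (Zm d z A) (Suc m) p q = (\<Sum>r<d. Zm d z A p r * fpow d (Zm d z A) m r q)"
    by (simp add: fpow_def fm_def)
  also have "\<dots> = (\<Sum>r<d. Zm d z A p r * (\<Sum>w\<in>?LW. sc (W d z w r q) * bw w))"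
    by (rule sum.cong[OF refl]) (simp add: Suc.IH)
  also have "\<dots> = (\<Sum>r<d. \<Sum>a\<in>A. \<Sum>b\<in>A. \<Sum>w\<in>?LW.
      sc (fm d (z a) (z b) p r * W d z w r q) * bw (a # b # w))"
  proof (rule sum.cong[OF refl])
    fix r
    have "Zm d z A p r * (\<Sum>w\<in>?LW. sc (W d z w r q) * bw w) =
      (\<Sum>a\<in>A. \<Sum>b\<in>A. \<Sum>w\<in>?LW. sc (fm d (z a) (z b) p r) * bw [a, b] * (sc (W d z w r q) * bw w))"
      unfolding Zm_def sum_distrib_right unfolding sum_distrib_left ..
    also have "\<dots> = (\<Sum>a\<in>A. \<Sum>b\<in>A. \<Sum>w\<in>?LW. sc (fm d (z a) (z b) p r * W d z w r q) * bw (a # b # w))"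
    proof (intro sum.cong refl)
      fix a b w assume "w \<in> ?LW"
      then have "even (length w)" by (simp add: lists_on_def)
      then show "sc (fm d (z a) (z b) p r) * bw [a, b] * (sc (W d z w r q) * bw w) =
          sc (fm d (z a) (z b) p r * W d z w r q) * bw (a # b # w)"
        using sc_bw_mult[of "[a, b]" w] by simp
    qed
    finally show "Zm d z A p r * (\<Sum>w\<in>?LW. sc (W d z w r q) * bw w) =
      (\<Sum>a\<in>A. \<Sum>b\<in>A. \<Sum>w\<in>?LW. sc (fm d (z a) (z b) p r * W d z w r q) * bw (a # b # w))" .
  qed
  also have "\<dots> = (\<Sum>a\<in>A. \<Sum>b\<in>A. \<Sum>w\<in>?LW. \<Sum>r<d.
      sc (fm d (z a) (z b) p r * W d z w r q) * bw (a # b # w))"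
  proof -
    have "(\<Sum>r<d. \<Sum>a\<in>A. \<Sum>b\<in>A. \<Sum>w\<in>?LW. F r a b w) = (\<Sum>a\<in>A. \<Sum>b\<in>A. \<Sum>w\<in>?LW. \<Sum>r<d. F r a b w)"
      for F :: "nat \<Rightarrow> nat \<Rightarrow> nat \<Rightarrow> nat list \<Rightarrow> 'a ev"
    proof -
      have "(\<Sum>r<d. \<Sum>a\<in>A. \<Sum>b\<in>A. \<Sum>w\<in>?LW. F r a b w) = (\<Sum>a\<in>A. \<Sum>r<d. \<Sum>b\<in>A. \<Sum>w\<in>?LW. F r a b w)"
        by (rule sum.swap)
      also have "\<dots> = (\<Sum>a\<in>A. \<Sum>b\<in>A. \<Sum>r<d. \<Sum>w\<in>?LW. F r a b w)"
        by (rule sum.cong[OF refl]) (rule sum.swap)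
      also have "\<dots> = (\<Sum>a\<in>A. \<Sum>b\<in>A. \<Sum>w\<in>?LW. \<Sum>r<d. F r a b w)"
        by (intro sum.cong refl) (rule sum.swap)
      finally show ?thesis .
    qed
    then show ?thesis .
  qed
  also have "\<dots> = (\<Sum>a\<in>A. \<Sum>b\<in>A. \<Sum>w\<in>?LW. sc (W d z (a # b # w) p q) * bw (a # b # w))"
  proof (intro sum.cong refl)
    fix a b w
    have "(\<Sum>r<d. sc (fm d (z a) (z b) p r * W d z w r q) * bw (a # b # w)) =
        sc (\<Sum>r<d. fm d (z a) (z b) p r * W d z w r q) * bw (a # b # w)"
      by (simp add: sc_sum sum_distrib_right)
    also have "(\<Sum>r<d. fm d (z a) (z b) p r * W d z w r q) = W d z (a # b # w) p q"
      by (simp add: W_Cons fm_assoc[symmetric]) (simp add: fm_def)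
    finally show "(\<Sum>r<d. sc (fm d (z a) (z b) p r * W d z w r q) * bw (a # b # w)) =
        sc (W d z (a # b # w) p q) * bw (a # b # w)" .
  qed
  also have "\<dots> = (\<Sum>w\<in>lists_on A (2 * Suc m). sc (W d z w p q) * bw w)"
  proof -
    have "2 * Suc m = Suc (Suc (2 * m))" by simp
    then show ?thesis using fin by (simp only: sum_lists_on_Suc)
  qed
  finally show ?case .
qed

lemma sum_rotate1:
  assumes "finite A"
  shows "(\<Sum>w\<in>lists_on A m. F (rotate1 w)) = (\<Sum>w\<in>lists_on A m. F w)"
proof -
  have inj: "inj_on rotate1 (lists_on A m)" using inj_rotate1 by (rule inj_on_subset) simp
  have img: "rotate1 ` lists_on A m = lists_on A m"
  proof
    show "rotate1 ` lists_on A m \<subseteq> lists_on A m" by (auto simp: lists_on_def)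
    show "lists_on A m \<subseteq> rotate1 ` lists_on A m"
    proof
      fix w assume w: "w \<in> lists_on A m"
      show "w \<in> rotate1 ` lists_on A m"
      proof (cases "length w = 0")
        case True then show ?thesis using w by (auto simp: lists_on_def)
      next
        case False
        have "rotate1 (rotate (length w - 1) w) = rotate (length w) w"
          using False by (metis Suc_diff_1 not_gr_zero rotate_Suc)
        also have "\<dots> = w" by simp
        finally show ?thesis using w by (auto simp: lists_on_def intro!: image_eqI[of _ _ "rotate (length w - 1) w"])
      qed
    qed
  qed
  show ?thesis using sum.reindex[OF inj, of F] img by simp
qed

lemma tr_Zpow_zero:
  fixes z :: "nat \<Rightarrow> nat \<Rightarrow> nat \<Rightarrow> 'a::field_char_0"
  assumes fin: "finite A" and j: "j \<ge> 1"
  shows "ftr d (fpow d (Zm d z A) j) = 0"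
proof -
  let ?LW = "lists_on A (2 * j)"
  have "ftr d (fpow d (Zm d z A) j) = (\<Sum>p<d. \<Sum>w\<in>?LW. sc (W d z w p p) * bw w)"
    unfolding ftr_def by (rule sum.cong[OF refl]) (simp add: Zpow[OF fin])
  also have "\<dots> = (\<Sum>w\<in>?LW. sc (ftr d (W d z w)) * bw w)"
    by (subst sum.swap) (simp add: ftr_def sc_sum sum_distrib_right)
  also have "\<dots> = 0"
  proof (rule gc_eqI)
    fix U
    define F where "F = (\<lambda>w. ftr d (W d z w) *
       (if distinct w \<and> even (length w) \<and> U = set w then of_int (lsign w) else (0::'a)))"
    have "gc (\<Sum>w\<in>?LW. sc (ftr d (W d z w)) * bw w) U = (\<Sum>w\<in>?LW. F w)"
      unfolding F_def by (simp add: gc_sum gc_sc_mult gc_bw)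
    moreover have "(\<Sum>w\<in>?LW. F w) = 0"
    proof -
      have "(\<Sum>w\<in>?LW. F w) = (\<Sum>w\<in>?LW. F (rotate1 w))" by (rule sum_rotate1[OF fin, symmetric])
      also have "\<dots> = (\<Sum>w\<in>?LW. - F w)"
      proof (rule sum.cong[OF refl])
        fix w assume "w \<in> ?LW"
        then have lw: "length w = 2 * j" by (simp add: lists_on_def)
        have od: "odd (length w - 1)" using lw j by simp
        have "distinct w \<Longrightarrow> lsign (rotate1 w) = - lsign w"
          using lsign_rotate1[of w] od by simp
        then show "F (rotate1 w) = - F w"
          unfolding F_def by (simp add: ftr_W_rotate1)
      qed
      also have "\<dots> = - (\<Sum>w\<in>?LW. F w)" by (simp add: sum_negf)
      finally show ?thesis by simp
    qed
    ultimately show "gc (\<Sum>w\<in>?LW. sc (ftr d (W d z w)) * bw w) U = gc 0 U" by (simp add: gc_zero)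
  qed
  finally show ?thesis .
qed

lemma fpow_zero_beyond:
  fixes N :: "nat \<Rightarrow> nat \<Rightarrow> 'a::comm_ring_1"
  assumes nil: "\<And>a b. a < d \<Longrightarrow> b < d \<Longrightarrow> fpow d N d b a = 0"
    and j: "d \<le> j" and pq: "p < d" "q < d"
  shows "fpow d N j p q = 0"
proof -
  have "replicate j N = replicate (j - d) N @ replicate d N"
    using j by (metis le_add_diff_inverse2 replicate_add)
  then have "fpow d N j p q = fm d (fpow d N (j - d)) (fpow d N d) p q"
    unfolding fpow_def using pq by (simp add: fml_append)
  also have "\<dots> = 0" unfolding fm_def using nil pq by simp
  finally show ?thesis .
qed

lemma AL_even:
  fixes z :: "nat \<Rightarrow> nat \<Rightarrow> nat \<Rightarrow> 'a::field_char_0"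
  assumes dL: "distinct L" and len: "length L = 2 * j" and dj: "d \<le> j" and pq: "p < d" "q < d"
  shows "(\<Sum>\<pi>\<in>{\<pi>. \<pi> permutes set L}. of_int (sign \<pi>) * W d z (map \<pi> L) p q) = 0"
proof -
  define A where "A = set L"
  define Z where "Z = Zm d z A"
  have finA: "finite A" unfolding A_def by simp
  have tf: "\<forall>m (x::'a ev). m > 0 \<longrightarrow> of_nat m * x = 0 \<longrightarrow> x = 0"
    using ev_torsion_free by blast
  have nil: "fpow d Z d b a = 0" if "a < d" "b < d" for a b
    unfolding Z_def by (rule nilpotent_trace[OF tf _ that]) (rule tr_Zpow_zero[OF finA])
  have zero: "fpow d Z j p q = 0" by (rule fpow_zero_beyond[OF nil dj pq])
  define D where "D = {w \<in> lists_on A (2 * j). distinct w \<and> set w = set L}"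
  have finL: "finite (lists_on A (2 * j))" using finite_lists_on[OF finA] .
  have "0 = gc (fpow d Z j p q) (set L)" using zero by (simp add: gc_zero)
  also have "\<dots> = (\<Sum>w\<in>lists_on A (2 * j). W d z w p q *
      (if distinct w \<and> even (length w) \<and> set L = set w then of_int (lsign w) else 0))"
    unfolding Z_def Zpow[OF finA pq(1)] by (simp add: gc_sum gc_sc_mult gc_bw)
  also have "\<dots> = (\<Sum>w\<in>lists_on A (2 * j). if w \<in> D then W d z w p q * of_int (lsign w) else 0)"
    by (rule sum.cong[OF refl]) (auto simp: D_def lists_on_def)
  also have "\<dots> = (\<Sum>w\<in>D. W d z w p q * of_int (lsign w))"
  proof -
    have "lists_on A (2 * j) \<inter> D = D" unfolding D_def by auto
    then show ?thesis using sum.inter_restrict[OF finL, of "\<lambda>w. W d z w p q * of_int (lsign w)" D] by simp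
  qed
  also have "\<dots> = (\<Sum>\<pi>\<in>{\<pi>. \<pi> permutes set L}. W d z (map \<pi> L) p q * of_int (lsign (map \<pi> L)))"
  proof (rule sum.reindex_bij_witness[of _ "\<lambda>\<pi>. map \<pi> L" "perm_between L"])
    fix w assume "w \<in> D"
    then have w: "distinct w" "set w = set L" by (auto simp: D_def)
    have lw: "length w = length L" using w dL by (metis distinct_card)
    show "map (perm_between L w) L = w" using perm_between_map[OF lw[symmetric] dL] .
    show "perm_between L w \<in> {\<pi>. \<pi> permutes set L}"
      using perm_between_permutes[OF lw[symmetric] dL w(1) w(2)[symmetric]] by simp
    show "W d z (map (perm_between L w) L) p q * of_int (lsign (map (perm_between L w) L)) =
        W d z w p q * of_int (lsign w)"
      using perm_between_map[OF lw[symmetric] dL] by simp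
  next
    fix \<pi> assume "\<pi> \<in> {\<pi>. \<pi> permutes set L}"
    then have pp: "\<pi> permutes set L" by simp
    show "perm_between L (map \<pi> L) = \<pi>"
      by (rule perm_between_unique[OF pp refl dL, symmetric])
    have "set (map \<pi> L) = set L" using pp by (simp add: permutes_image)
    moreover have "distinct (map \<pi> L)" using dL permutes_inj_on[OF pp] by (simp add: distinct_map)
    ultimately show "map \<pi> L \<in> D" unfolding D_def lists_on_def A_def using len by simp
  qed
  also have "\<dots> = of_int (lsign L) * (\<Sum>\<pi>\<in>{\<pi>. \<pi> permutes set L}. of_int (sign \<pi>) * W d z (map \<pi> L) p q)"
    unfolding sum_distrib_left
    by (rule sum.cong[OF refl]) (simp add: lsign_map[OF dL] algebra_simps)
  finally have "of_int (lsign L) * (\<Sum>\<pi>\<in>{\<pi>. \<pi> permutes set L}. of_int (sign \<pi>) * W d z (map \<pi> L) p q) = 0"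
    by simp
  moreover have "lsign L \<noteq> 0" unfolding lsign_def by simp
  ultimately show ?thesis by simp
qed

lemma W_map: "W d z (map \<tau> v) = W d (z \<circ> \<tau>) v"
  by (simp add: W_def)

theorem amitsur_levitzki:
  fixes z :: "nat \<Rightarrow> nat \<Rightarrow> nat \<Rightarrow> 'a::field_char_0"
  assumes dL: "distinct L" and len: "2 * d \<le> length L" and pq: "p < d" "q < d"
  shows "(\<Sum>\<pi>\<in>{\<pi>. \<pi> permutes set L}. of_int (sign \<pi>) * W d z (map \<pi> L) p q) = 0"
proof (cases "even (length L)")
  case True
  then obtain j where j: "length L = 2 * j" by (metis evenE)
  show ?thesis by (rule AL_even[OF dL j _ pq]) (use j len in simp)
next
  case False
  then obtain a L' where L: "L = a # L'" by (cases L) auto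
  then have dL': "distinct L'" and aL': "a \<notin> set L'" using dL by auto
  from False L obtain j where j: "length L' = 2 * j" by (metis evenE even_Suc length_Cons)
  have dj: "d \<le> j" using len j L by simp
  show ?thesis
  proof (rule averaging[where P = "set L'"])
    show "finite (set L)" by simp
    show "set L' \<subseteq> set L" using L by auto
    fix \<tau> assume tp: "\<tau> permutes set L"
    have "(\<Sum>\<pi>\<in>{\<pi>. \<pi> permutes set L'}. of_int (sign \<pi>) * W d z (map (\<tau> \<circ> \<pi>) L) p q) =
        (\<Sum>\<pi>\<in>{\<pi>. \<pi> permutes set L'}. \<Sum>r<d. z (\<tau> a) p r * (of_int (sign \<pi>) * W d (z \<circ> \<tau>) (map \<pi> L') r q))"
    proof (rule sum.cong[OF refl])
      fix \<pi> assume "\<pi> \<in> {\<pi>. \<pi> permutes set L'}"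
      then have "\<pi> a = a" using aL' by (simp add: permutes_not_in)
      then have "map (\<tau> \<circ> \<pi>) L = \<tau> a # map \<tau> (map \<pi> L')" using L by simp
      then have "W d z (map (\<tau> \<circ> \<pi>) L) p q = (\<Sum>r<d. z (\<tau> a) p r * W d (z \<circ> \<tau>) (map \<pi> L') r q)"
        by (simp add: W_Cons fm_def W_map o_assoc)
      then show "of_int (sign \<pi>) * W d z (map (\<tau> \<circ> \<pi>) L) p q =
          (\<Sum>r<d. z (\<tau> a) p r * (of_int (sign \<pi>) * W d (z \<circ> \<tau>) (map \<pi> L') r q))"
        by (simp add: sum_distrib_left algebra_simps)
    qed
    also have "\<dots> = (\<Sum>r<d. z (\<tau> a) p r *
        (\<Sum>\<pi>\<in>{\<pi>. \<pi> permutes set L'}. of_int (sign \<pi>) * W d (z \<circ> \<tau>) (map \<pi> L') r q))"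
      by (subst sum.swap) (simp add: sum_distrib_left)
    also have "\<dots> = 0"
    proof (rule sum.neutral, rule ballI)
      fix r assume "r \<in> {..<d}"
      then have r: "r < d" by simp
      show "z (\<tau> a) p r * (\<Sum>\<pi>\<in>{\<pi>. \<pi> permutes set L'}. of_int (sign \<pi>) * W d (z \<circ> \<tau>) (map \<pi> L') r q) = 0"
        using AL_even[OF dL' j dj r pq(2), of "z \<circ> \<tau>"] by simp
    qed
    finally show "(\<Sum>\<pi>\<in>{\<pi>. \<pi> permutes set L'}. of_int (sign \<pi>) * W d z (map (\<tau> \<circ> \<pi>) L) p q) = 0" .
  qed
qed

definition ent :: "'a mat \<Rightarrow> nat \<Rightarrow> nat \<Rightarrow> 'a" where
  "ent A = (\<lambda>p q. A $$ (p, q))"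

lemma mult_mat_entry:
  assumes "A \<in> carrier_mat d d" "B \<in> carrier_mat d d" "p < d" "q < d"
  shows "(A * B) $$ (p, q) = (\<Sum>r<d. A $$ (p, r) * B $$ (r, q))"
  using assms by (simp add: scalar_prod_def atLeast0LessThan)

lemma mat_prod_list_entries:
  fixes As :: "'a::comm_ring_1 mat list"
  assumes "\<forall>A\<in>set As. A \<in> carrier_mat d d"
  shows "mat_prod_list d As \<in> carrier_mat d d \<and>
    (\<forall>p q. p < d \<longrightarrow> q < d \<longrightarrow> mat_prod_list d As $$ (p, q) = fml d (map ent As) p q)"
  using assms
proof (induction As)
  case Nil
  show ?case by (simp add: mat_prod_list_def fid_def)
next
  case (Cons A As)
  have A: "A \<in> carrier_mat d d" using Cons.prems by simp
  have IH: "mat_prod_list d As \<in> carrier_mat d d"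
    "\<And>p q. p < d \<Longrightarrow> q < d \<Longrightarrow> mat_prod_list d As $$ (p, q) = fml d (map ent As) p q"
    using Cons by auto
  have e: "mat_prod_list d (A # As) = A * mat_prod_list d As" by (simp add: mat_prod_list_def)
  show ?case
  proof (intro conjI allI impI)
    show "mat_prod_list d (A # As) \<in> carrier_mat d d" using e A IH(1) by simp
    fix p q assume pq: "p < d" "q < d"
    have "mat_prod_list d (A # As) $$ (p, q) = (\<Sum>r<d. A $$ (p, r) * mat_prod_list d As $$ (r, q))"
      unfolding e by (rule mult_mat_entry[OF A IH(1) pq])
    also have "\<dots> = fml d (map ent (A # As)) p q"
      using IH(2) pq by (simp add: fm_def ent_def)
    finally show "mat_prod_list d (A # As) $$ (p, q) = fml d (map ent (A # As)) p q" .
  qed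
qed

lemma fml_cong:
  assumes "length As = length Bs"
    and "\<And>i p q. i < length As \<Longrightarrow> p < d \<Longrightarrow> q < d \<Longrightarrow> (As ! i) p q = (Bs ! i) p q"
    and "p < d" "q < d"
  shows "fml d As p q = fml d Bs p q"
  using assms
proof (induction As arbitrary: Bs p)
  case Nil then show ?case by simp
next
  case (Cons A As)
  then obtain B Bs' where Bs: "Bs = B # Bs'" by (cases Bs) auto
  have "fml d (A # As) p q = (\<Sum>r<d. A p r * fml d As r q)" by (simp add: fm_def)
  also have "\<dots> = (\<Sum>r<d. B p r * fml d Bs' r q)"
  proof (rule sum.cong[OF refl])
    fix r assume "r \<in> {..<d}"
    then have r: "r < d" by simp
    have "A p r = B p r" using Cons.prems(2)[of 0 p r] Cons.prems(3) r Bs by simp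
    moreover have "fml d As r q = fml d Bs' r q"
      using Cons.IH[of Bs' r] Cons.prems Bs r by fastforce
    ultimately show "A p r * fml d As r q = B p r * fml d Bs' r q" by simp
  qed
  also have "\<dots> = fml d Bs p q" using Bs by (simp add: fm_def)
  finally show ?case .
qed

lemma fml_concat_W:
  assumes "p < d" "q < d"
  shows "fml d (map (\<lambda>j. W d z (f j)) js) p q = W d z (concat (map f js)) p q"
  using assms
proof (induction js arbitrary: p)
  case Nil then show ?case by (simp add: W_def)
next
  case (Cons j js)
  have "fml d (map (\<lambda>j. W d z (f j)) (j # js)) p q = (\<Sum>r<d. W d z (f j) p r * fml d (map (\<lambda>j. W d z (f j)) js) r q)"
    by (simp add: fm_def)
  also have "\<dots> = (\<Sum>r<d. W d z (f j) p r * W d z (concat (map f js)) r q)"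
    using Cons by simp
  also have "\<dots> = W d z (concat (map f (j # js))) p q"
    using Cons.prems by (simp add: W_def fml_append fm_def)
  finally show ?case .
qed

lemma block_start_Suc:
  "j < length h \<Longrightarrow> block_start h (Suc j) = block_start h j + h ! j"
  unfolding block_start_def by (simp add: take_Suc_conv_app_nth)

lemma block_start_mono:
  "a \<le> b \<Longrightarrow> block_start h a \<le> block_start h b"
  unfolding block_start_def
  by (metis le_add1 le_add_diff_inverse sum_list_append take_add)

lemma block_end_le:
  assumes "j < length h"
  shows "block_start h j + h ! j \<le> sum_list h"
proof -
  have "block_start h j + h ! j = block_start h (Suc j)" using block_start_Suc[OF assms] by simp
  also have "\<dots> \<le> block_start h (length h)" using assms by (intro block_start_mono) simp
  also have "\<dots> = sum_list h" by (simp add: block_start_def)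
  finally show ?thesis .
qed

definition blk :: "nat list \<Rightarrow> nat \<Rightarrow> nat list" where
  "blk h j = [block_start h j..<block_start h j + h ! j]"

lemma blk_disjoint:
  assumes "j1 < length h" "j2 < length h" "j1 \<noteq> j2"
  shows "set (blk h j1) \<inter> set (blk h j2) = {}"
proof -
  have *: "set (blk h a) \<inter> set (blk h b) = {}" if "a < b" "b < length h" for a b
  proof -
    have "block_start h a + h ! a = block_start h (Suc a)" using that block_start_Suc by simp
    also have "\<dots> \<le> block_start h b" using that by (intro block_start_mono) simp
    finally show ?thesis unfolding blk_def by auto
  qed
  show ?thesis using assms *[of j1 j2] *[of j2 j1] by (cases "j1 < j2") auto
qed

lemma blk_subset:
  assumes "j < length h"
  shows "set (blk h j) \<subseteq> {0..<sum_list h}"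
  using block_end_le[OF assms] unfolding blk_def by auto

lemma block_prod_blk:
  "block_prod d h y j = mat_prod_list d (map y (blk h j))"
proof -
  have e1: "map (\<lambda>t. y (block_start h j + t)) [0..<h ! j] = map y (map (\<lambda>t. block_start h j + t) [0..<h ! j])"
    by simp
  have e2: "map (\<lambda>t. block_start h j + t) [0..<h ! j] = [block_start h j..<block_start h j + h ! j]"
    using map_add_upt[of "block_start h j" "h ! j"] by (simp add: add.commute)
  show ?thesis unfolding block_prod_def blk_def e1 e2 ..
qed

lemma ttrace_perm_op:
  fixes M :: "'a::comm_ring_1 tmat"
  assumes sp: "\<sigma> permutes {0..<n}"
  shows "ttrace d n (tmult d n (perm_op n \<sigma>) M) =
    (\<Sum>i\<in>tidx d n. M (restrict (\<lambda>j. i (\<sigma> j)) {0..<n}) i)"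
proof -
  have "ttrace d n (tmult d n (perm_op n \<sigma>) M) =
      (\<Sum>i\<in>tidx d n. \<Sum>i'\<in>tidx d n. perm_op n \<sigma> i i' * M i' i)"
    by (simp add: ttrace_def tmult_def)
  also have "\<dots> = (\<Sum>i\<in>tidx d n. M (restrict (\<lambda>j. i (\<sigma> j)) {0..<n}) i)"
  proof (rule sum.cong[OF refl])
    fix i assume i: "i \<in> tidx d n"
    let ?r = "restrict (\<lambda>j. i (\<sigma> j)) {0..<n}"
    have rin: "?r \<in> tidx d n"
      using i permutes_in_image[OF sp] by (auto simp: tidx_def PiE_def Pi_def)
    have iff: "(\<forall>j<n. i j = i' (inv_into UNIV \<sigma> j)) \<longleftrightarrow> i' = ?r" if i': "i' \<in> tidx d n" for i'
    proof
      assume h: "\<forall>j<n. i j = i' (inv_into UNIV \<sigma> j)"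
      show "i' = ?r"
      proof
        fix j show "i' j = ?r j"
        proof (cases "j < n")
          case True
          then have "\<sigma> j < n" using permutes_in_image[OF sp] by simp
          then have "i (\<sigma> j) = i' (inv_into UNIV \<sigma> (\<sigma> j))" using h by simp
          also have "inv_into UNIV \<sigma> (\<sigma> j) = j" using permutes_inj[OF sp] by (simp add: inv_into_f_f)
          finally show ?thesis using True by simp
        next
          case False then show ?thesis using i' by (simp add: tidx_def PiE_def extensional_def)
        qed
      qed
    next
      assume h: "i' = ?r"
      show "\<forall>j<n. i j = i' (inv_into UNIV \<sigma> j)"
      proof (intro allI impI)
        fix j assume j: "j < n"
        have ij: "inv_into UNIV \<sigma> j < n"
          using j permutes_inv[OF sp] permutes_in_image by (metis atLeastLessThan_iff permutes_inv_eq sp zero_le)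
        have "\<sigma> (inv_into UNIV \<sigma> j) = j" using permutes_surj[OF sp] by (simp add: f_inv_into_f)
        then show "i j = i' (inv_into UNIV \<sigma> j)" using h ij by simp
      qed
    qed
    have "(\<Sum>i'\<in>tidx d n. perm_op n \<sigma> i i' * M i' i) = (\<Sum>i'\<in>tidx d n. if i' = ?r then M i' i else 0)"
      by (rule sum.cong[OF refl]) (simp add: perm_op_def iff)
    also have "\<dots> = M ?r i" using rin by (simp add: sum.delta' finite_PiE tidx_def)
    finally show "(\<Sum>i'\<in>tidx d n. perm_op n \<sigma> i i' * M i' i) = M ?r i" .
  qed
  finally show ?thesis .
qed

lemma exists_big_cycle:
  assumes sp: "\<sigma> permutes {0..<length h}" and hne: "h \<noteq> []"
    and big: "Max (set_mset (sigma_partition \<sigma> h)) \<ge> m"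
  shows "\<exists>j0<length h. m \<le> (\<Sum>i\<in>cycle_of \<sigma> j0. h ! i)"
proof -
  let ?f = "\<lambda>c. \<Sum>i\<in>c. h ! i"
  let ?C = "perm_cycles (length h) \<sigma>"
  have finC: "finite ?C" unfolding perm_cycles_def by simp
  have neC: "?C \<noteq> {}" unfolding perm_cycles_def using hne by simp
  have "set_mset (sigma_partition \<sigma> h) = ?f ` ?C"
    unfolding sigma_partition_def using finC by simp
  moreover have "Max (?f ` ?C) \<in> ?f ` ?C" using finC neC by (intro Max_in) auto
  ultimately obtain c where c: "c \<in> ?C" "?f c = Max (set_mset (sigma_partition \<sigma> h))" by auto
  then obtain j0 where "j0 < length h" "c = cycle_of \<sigma> j0" unfolding perm_cycles_def by auto
  then show ?thesis using c big by auto
qed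

theorem mainTheorem6:
  fixes h :: "nat list" and k d :: nat and \<sigma> :: "nat \<Rightarrow> nat"
    and x :: "nat \<Rightarrow> 'a::field_char_0 mat"
  assumes "d \<ge> 1"
    and "is_partition h k" and "h \<noteq> []"
    and "\<sigma> permutes {0..<length h}"
    and "Max (set_mset (sigma_partition \<sigma> h)) \<ge> 2 * d"
    and "\<And>m. m < k \<Longrightarrow> x m \<in> carrier_mat d d"
  shows "ttrace d (length h) (tmult d (length h) (perm_op (length h) \<sigma>) (ST d h x)) = 0"
proof -
  define n where "n = length h"
  have hk: "sum_list h = k" and pos: "\<forall>p\<in>set h. p > 0" using assms(2) by (auto simp: is_partition_def)
  have sp: "\<sigma> permutes {0..<n}" using assms(4) by (simp add: n_def)
  have xc: "\<And>m. m < k \<Longrightarrow> x m \<in> carrier_mat d d" by (rule assms(6))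
  define zz where "zz = (\<lambda>m. ent (x m))"
  define A where "A = (\<lambda>\<tau> j p q. block_prod d h (\<lambda>m. x (\<tau> m)) j $$ (p, q))"
  define T where "T = (\<lambda>\<tau>. \<Sum>i\<in>tidx d n. \<Prod>j<n. A \<tau> j (i (\<sigma> j)) (i j))"
  define Perm where "Perm = {\<tau>. \<tau> permutes {0..<k}}"
  have stepA: "ttrace d n (tmult d n (perm_op n \<sigma>) (ST d h x)) =
      (\<Sum>\<tau>\<in>Perm. of_int (sign \<tau>) * T \<tau>)"
  proof -
    have "ttrace d n (tmult d n (perm_op n \<sigma>) (ST d h x)) =
        (\<Sum>i\<in>tidx d n. ST d h x (restrict (\<lambda>j. i (\<sigma> j)) {0..<n}) i)"
      by (rule ttrace_perm_op[OF sp])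
    also have "\<dots> = (\<Sum>i\<in>tidx d n. \<Sum>\<tau>\<in>Perm. of_int (sign \<tau>) * (\<Prod>j<n. A \<tau> j (i (\<sigma> j)) (i j)))"
    proof (rule sum.cong[OF refl])
      fix i
      have "tensor_op n (block_prod d h (\<lambda>m. x (\<tau> m))) (restrict (\<lambda>j. i (\<sigma> j)) {0..<n}) i =
          (\<Prod>j<n. A \<tau> j (i (\<sigma> j)) (i j))" for \<tau>
        unfolding tensor_op_def A_def by (rule prod.cong) auto
      then show "ST d h x (restrict (\<lambda>j. i (\<sigma> j)) {0..<n}) i =
          (\<Sum>\<tau>\<in>Perm. of_int (sign \<tau>) * (\<Prod>j<n. A \<tau> j (i (\<sigma> j)) (i j)))"
        unfolding ST_def Perm_def hk n_def by simp
    qed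
    also have "\<dots> = (\<Sum>\<tau>\<in>Perm. of_int (sign \<tau>) * T \<tau>)"
      unfolding T_def sum_distrib_left by (rule sum.swap)
    finally show ?thesis .
  qed
  obtain j0 where j0: "j0 < n" and big: "2 * d \<le> (\<Sum>i\<in>cycle_of \<sigma> j0. h ! i)"
    using exists_big_cycle[OF assms(4) assms(3) assms(5)] n_def by auto
  define c where "c = cycle_of \<sigma> j0"
  have perm: "permutation \<sigma>" using sp permutation_permutes by blast
  define S where "S = support \<sigma> j0"
  have dS: "distinct S" unfolding S_def by (rule cycle_of_permutation[OF perm])
  have sS: "set S = c" unfolding S_def c_def by (simp add: cycle_of_support[OF perm])
  have cn: "c \<subseteq> {0..<n}" unfolding c_def using cycle_of_subset[OF sp] j0 by simp
  have lSr: "length S = card c" unfolding S_def c_def by (simp add: card_cycle_of[OF perm])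
  have mS: "map (\<lambda>t. (\<sigma> ^^ t) j0) [0..<card c] = S"
    unfolding S_def c_def by (simp add: card_cycle_of[OF perm])
  define L where "L = concat (map (blk h) (rev S))"
  have setL: "set L = (\<Union>j\<in>c. set (blk h j))"
    unfolding L_def by (simp only: set_concat set_map set_rev image_image sS)
  have Lk: "set L \<subseteq> {0..<k}"
  proof -
    have "set (blk h j) \<subseteq> {0..<k}" if "j \<in> c" for j
    proof -
      have "j < length h" using that cn n_def by auto
      then show ?thesis using blk_subset[of j h] hk by simp
    qed
    then show ?thesis unfolding setL by blast
  qed
  have blkc: "\<And>j. j \<in> c \<Longrightarrow> j < length h" using cn n_def by auto
  have dL: "distinct L"
    unfolding L_def
  proof (rule distinct_concat)
    have "inj_on (blk h) (set (rev S))"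
    proof (rule inj_onI)
      fix j1 j2 assume j: "j1 \<in> set (rev S)" "j2 \<in> set (rev S)" "blk h j1 = blk h j2"
      show "j1 = j2"
      proof (rule ccontr)
        assume ne: "j1 \<noteq> j2"
        have l: "j1 < length h" "j2 < length h" using j blkc sS by auto
        have "set (blk h j1) = {}" using blk_disjoint[OF l ne] j(3) by simp
        moreover have "h ! j1 > 0" using pos l nth_mem by blast
        ultimately show False unfolding blk_def by simp
      qed
    qed
    then show "distinct (map (blk h) (rev S))" using dS by (simp add: distinct_map)
    show "\<And>ys. ys \<in> set (map (blk h) (rev S)) \<Longrightarrow> distinct ys" by (auto simp: blk_def)
    show "\<And>ys zs. ys \<in> set (map (blk h) (rev S)) \<Longrightarrow> zs \<in> set (map (blk h) (rev S)) \<Longrightarrow> ys \<noteq> zs \<Longrightarrow>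
        set ys \<inter> set zs = {}"
    proof -
      fix ys zs assume "ys \<in> set (map (blk h) (rev S))" "zs \<in> set (map (blk h) (rev S))" "ys \<noteq> zs"
      then obtain j1 j2 where "j1 \<in> c" "j2 \<in> c" "ys = blk h j1" "zs = blk h j2" "j1 \<noteq> j2"
        using sS by auto
      then show "set ys \<inter> set zs = {}" using blk_disjoint blkc by blast
    qed
  qed
  have lenL: "2 * d \<le> length L"
  proof -
    have "length L = sum_list (map (\<lambda>j. h ! j) (rev S))"
      unfolding L_def length_concat map_map by (simp add: blk_def comp_def)
    also have "\<dots> = sum_list (map (\<lambda>j. h ! j) S)" by (simp add: rev_map[symmetric])
    also have "\<dots> = (\<Sum>j\<in>c. h ! j)" using sum.distinct_set_conv_list[OF dS, of "\<lambda>j. h ! j"] sS by simp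
    finally show ?thesis using big c_def by simp
  qed
  define Out where "Out = (\<lambda>\<tau>. \<Sum>i\<in>PiE ({0..<n} - c) (\<lambda>_. {0..<d}). \<Prod>j\<in>{0..<n} - c. A \<tau> j (i (\<sigma> j)) (i j))"
  have AW: "A \<tau> j p q = W d (zz \<circ> \<tau>) (blk h j) p q" if tj: "\<tau> \<in> Perm" "j < n" "p < d" "q < d" for \<tau> j p q
  proof -
    have tp: "\<tau> permutes {0..<k}" using tj(1) by (simp add: Perm_def)
    have car: "\<forall>B\<in>set (map (\<lambda>m. x (\<tau> m)) (blk h j)). B \<in> carrier_mat d d"
    proof
      fix B assume "B \<in> set (map (\<lambda>m. x (\<tau> m)) (blk h j))"
      then obtain m where m: "m \<in> set (blk h j)" "B = x (\<tau> m)" by auto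
      have "m < k" using m(1) blk_subset[of j h] tj(2) hk n_def by auto
      then have "\<tau> m < k" using permutes_in_image[OF tp] by simp
      then show "B \<in> carrier_mat d d" using m(2) xc by simp
    qed
    have "A \<tau> j p q = mat_prod_list d (map (\<lambda>m. x (\<tau> m)) (blk h j)) $$ (p, q)"
      unfolding A_def block_prod_blk ..
    also have "\<dots> = fml d (map ent (map (\<lambda>m. x (\<tau> m)) (blk h j))) p q"
      using mat_prod_list_entries[OF car] tj(3,4) by blast
    also have "\<dots> = W d (zz \<circ> \<tau>) (blk h j) p q"
      unfolding W_def zz_def by (simp add: comp_def)
    finally show ?thesis .
  qed
  have stepC: "T \<tau> = Out \<tau> * ftr d (W d (zz \<circ> \<tau>) L)" if tP: "\<tau> \<in> Perm" for \<tau>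
  proof -
    have "T \<tau> = Out \<tau> * ftr d (fml d (rev (map (\<lambda>t. A \<tau> ((\<sigma> ^^ t) j0)) [0..<card c])))"
      unfolding T_def Out_def c_def by (rule isolate_cycle[OF sp j0])
    also have "rev (map (\<lambda>t. A \<tau> ((\<sigma> ^^ t) j0)) [0..<card c]) = map (A \<tau>) (rev S)"
    proof -
      have "map (\<lambda>t. A \<tau> ((\<sigma> ^^ t) j0)) [0..<card c] = map (A \<tau>) (map (\<lambda>t. (\<sigma> ^^ t) j0) [0..<card c])"
        by simp
      then show ?thesis unfolding mS by (simp add: rev_map)
    qed
    also have "ftr d (fml d (map (A \<tau>) (rev S))) = ftr d (W d (zz \<circ> \<tau>) L)"
      unfolding ftr_def
    proof (rule sum.cong[OF refl])
      fix p assume "p \<in> {..<d}"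
      then have p: "p < d" by simp
      have "fml d (map (A \<tau>) (rev S)) p p = fml d (map (\<lambda>j. W d (zz \<circ> \<tau>) (blk h j)) (rev S)) p p"
      proof (rule fml_cong[OF _ _ p p])
        fix i p' q' assume i: "i < length (map (A \<tau>) (rev S))" and pq: "p' < d" "q' < d"
        have "rev S ! i \<in> set S" using i by (metis length_map length_rev nth_mem set_rev)
        then have "rev S ! i < n" using sS cn by auto
        then show "(map (A \<tau>) (rev S) ! i) p' q' = (map (\<lambda>j. W d (zz \<circ> \<tau>) (blk h j)) (rev S) ! i) p' q'"
          using AW[OF tP _ pq] i by simp
      qed simp
      also have "\<dots> = W d (zz \<circ> \<tau>) L p p"
        unfolding L_def by (rule fml_concat_W[OF p p])
      finally show "fml d (map (A \<tau>) (rev S)) p p = W d (zz \<circ> \<tau>) L p p" .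
    qed
    finally show ?thesis .
  qed
  have outinv: "Out (\<tau> \<circ> \<pi>) = Out \<tau>" if piL: "\<pi> permutes set L" for \<tau> \<pi>
  proof -
    have "A (\<tau> \<circ> \<pi>) j = A \<tau> j" if j: "j \<in> {0..<n} - c" for j
    proof -
      have eqm: "map (\<lambda>m. x ((\<tau> \<circ> \<pi>) m)) (blk h j) = map (\<lambda>m. x (\<tau> m)) (blk h j)"
      proof (rule map_cong[OF refl])
        fix m assume m: "m \<in> set (blk h j)"
        have "m \<notin> set L"
        proof
          assume "m \<in> set L"
          then obtain j' where j': "j' \<in> c" "m \<in> set (blk h j')" unfolding setL by auto
          have "j' \<noteq> j" using j j' by auto
          moreover have "j < length h" "j' < length h" using j j' blkc n_def by auto
          ultimately show False using blk_disjoint m j' by blast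
        qed
        then have "\<pi> m = m" using piL by (simp add: permutes_not_in)
        then show "x ((\<tau> \<circ> \<pi>) m) = x (\<tau> m)" by simp
      qed
      show ?thesis unfolding A_def block_prod_blk eqm ..
    qed
    then show ?thesis unfolding Out_def by (intro sum.cong refl prod.cong) auto
  qed
  have "(\<Sum>\<tau>\<in>Perm. of_int (sign \<tau>) * T \<tau>) =
      (\<Sum>\<tau>\<in>Perm. of_int (sign \<tau>) * (Out \<tau> * ftr d (W d (zz \<circ> \<tau>) L)))"
    by (rule sum.cong[OF refl]) (simp add: stepC)
  also have "\<dots> = 0"
    unfolding Perm_def
  proof (rule averaging[where P = "set L"])
    show "finite {0..<k}" by simp
    show "set L \<subseteq> {0..<k}" by (rule Lk)
    fix \<tau> :: "nat \<Rightarrow> nat" assume "\<tau> permutes {0..<k}"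
    have "(\<Sum>\<pi>\<in>{\<pi>. \<pi> permutes set L}. of_int (sign \<pi>) * (Out (\<tau> \<circ> \<pi>) * ftr d (W d (zz \<circ> (\<tau> \<circ> \<pi>)) L))) =
        (\<Sum>\<pi>\<in>{\<pi>. \<pi> permutes set L}. Out \<tau> * (\<Sum>p<d. of_int (sign \<pi>) * W d (zz \<circ> \<tau>) (map \<pi> L) p p))"
    proof (rule sum.cong[OF refl])
      fix \<pi> assume "\<pi> \<in> {\<pi>. \<pi> permutes set L}"
      then have "Out (\<tau> \<circ> \<pi>) = Out \<tau>" using outinv by simp
      moreover have "W d (zz \<circ> (\<tau> \<circ> \<pi>)) L = W d (zz \<circ> \<tau>) (map \<pi> L)"
        by (simp add: W_map o_assoc)
      ultimately show "of_int (sign \<pi>) * (Out (\<tau> \<circ> \<pi>) * ftr d (W d (zz \<circ> (\<tau> \<circ> \<pi>)) L)) =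
          Out \<tau> * (\<Sum>p<d. of_int (sign \<pi>) * W d (zz \<circ> \<tau>) (map \<pi> L) p p)"
        by (simp add: ftr_def sum_distrib_left algebra_simps)
    qed
    also have "\<dots> = Out \<tau> * (\<Sum>p<d. \<Sum>\<pi>\<in>{\<pi>. \<pi> permutes set L}. of_int (sign \<pi>) * W d (zz \<circ> \<tau>) (map \<pi> L) p p)"
      by (subst sum.swap) (simp add: sum_distrib_left)
    also have "\<dots> = 0"
    proof -
      have "(\<Sum>p<d. \<Sum>\<pi>\<in>{\<pi>. \<pi> permutes set L}. of_int (sign \<pi>) * W d (zz \<circ> \<tau>) (map \<pi> L) p p) = 0"
      proof (rule sum.neutral, rule ballI)
        fix p assume "p \<in> {..<d}"
        then have p: "p < d" by simp
        show "(\<Sum>\<pi>\<in>{\<pi>. \<pi> permutes set L}. of_int (sign \<pi>) * W d (zz \<circ> \<tau>) (map \<pi> L) p p) = 0"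
          by (rule amitsur_levitzki[OF dL lenL p p])
      qed
      then show ?thesis by simp
    qed
    finally show "(\<Sum>\<pi>\<in>{\<pi>. \<pi> permutes set L}. of_int (sign \<pi>) * (Out (\<tau> \<circ> \<pi>) * ftr d (W d (zz \<circ> (\<tau> \<circ> \<pi>)) L))) = 0" .
  qed
  finally have "(\<Sum>\<tau>\<in>Perm. of_int (sign \<tau>) * T \<tau>) = 0" .
  then show ?thesis using stepA by (simp add: n_def)
qed

end
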